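(* Let $\mathcal{H}$ be a real Hilbert space, let $A\colon \mathcal{H}\rightrightarrows\mathcal{H}$ be maximally monotone, let $B\colon \mathcal{H}\to\mathcal{H}$ be monotone and $L$-Lipschitz continuous, and suppose that $(A+B)^{-1}(0)\neq\varnothing$. Suppose $(\lambda_k)_{k\geq -1}\subseteq\left[\varepsilon,\frac{1-2\varepsilon}{2L}\right]$ for some $\varepsilon>0$. Given $x_0,x_{-1}\in\mathcal{H}$, define the sequence $(x_k)$ by $$x_{k+1} = J_{\lambda_k A}\bigl(x_k - \lambda_k B(x_k) - \lambda_{k-1}(B(x_k)-B(x_{k-1})) \bigr) \quad\forall k\in\mathbb{N}=\{0,1,2,\dots\}.$$ Then $(x_k)$ converges weakly to a point contained in $(A+B)^{-1}(0)=\{x\in\mathcal{H}: 0\in A(x)+B(x)\}$.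
   Context: For a maximally monotone operator $A$ and $\lambda>0$, the resolvent is $J_{\lambda A}:=(I+\lambda A)^{-1}$, which is single-valued and defined everywhere on $\mathcal{H}$. An operator $B$ is monotone if $\langle x-y,B(x)-B(y)\rangle\geq 0$ for all $x,y$, and $L$-Lipschitz if $\|B(x)-B(y)\|\leq L\|x-y\|$ for all $x,y$. *)

theory Defs
  imports "HOL-Analysis.Analysis"
begin

definition monotone_op :: "('a::real_inner \<Rightarrow> 'a set) \<Rightarrow> bool" where
  "monotone_op A \<longleftrightarrow> (\<forall>x y u v. u \<in> A x \<longrightarrow> v \<in> A y \<longrightarrow> 0 \<le> inner (x - y) (u - v))"

definition maximally_monotone :: "('a::real_inner \<Rightarrow> 'a set) \<Rightarrow> bool" where
  "maximally_monotone A \<longleftrightarrow> monotone_op A \<and>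
     (\<forall>A'. monotone_op A' \<and> (\<forall>x. A x \<subseteq> A' x) \<longrightarrow> A' = A)"

definition monotone_single :: "('a::real_inner \<Rightarrow> 'a) \<Rightarrow> bool" where
  "monotone_single B \<longleftrightarrow> (\<forall>x y. 0 \<le> inner (x - y) (B x - B y))"

text \<open>Resolvent J_{lam A} z = (I + lam A)^{-1} z: the point x with z \<in> x + lam A(x).\<close>
definition resolvent :: "real \<Rightarrow> ('a::real_inner \<Rightarrow> 'a set) \<Rightarrow> 'a \<Rightarrow> 'a" where
  "resolvent lam A z = (THE x. z \<in> (\<lambda>u. x + lam *\<^sub>R u) ` A x)"

definition weakly_converges_to :: "(nat \<Rightarrow> 'a::real_inner) \<Rightarrow> 'a \<Rightarrow> bool" where
  "weakly_converges_to x p \<longleftrightarrow> (\<forall>y. (\<lambda>k. inner (x k) y) \<longlonglongrightarrow> inner p y)"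

definition zeros_sum :: "('a::real_vector \<Rightarrow> 'a set) \<Rightarrow> ('a \<Rightarrow> 'a) \<Rightarrow> 'a set" where
  "zeros_sum A B = {x. \<exists>a\<in>A x. a + B x = 0}"

end

theory Submission
  imports Defs "HOL-Library.Diagonal_Subsequence"
begin

lemma para:
  fixes u v :: "'a::real_inner"
  shows "norm (u - v)^2 = 2 * norm u ^2 + 2 * norm v^2 - 4 * norm ((1/2) *\<^sub>R (u+v))^2"
  by (simp add: power2_norm_eq_inner inner_simps algebra_simps)

lemma Cauchy_sq:
  fixes f :: "nat \<Rightarrow> 'a::real_normed_vector"
  assumes c: "c \<ge> 0" and h: "\<And>m n. m \<le> n \<Longrightarrow> norm (f m - f n)^2 \<le> c * inverse (real (Suc m))"
  shows "Cauchy f"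
proof (rule metric_CauchyI)
  fix e :: real assume e: "e > 0"
  obtain N :: nat where N: "c / e^2 < real N" using reals_Archimedean2 by blast
  have cN: "c * inverse (real (Suc N)) < e^2"
  proof -
    have e2: "e^2 > 0" using e by simp
    have "c < e^2 * real N" using N e2 by (simp add: divide_less_eq mult.commute)
    also have "\<dots> \<le> e^2 * real (Suc N)" using e2 by simp
    finally show ?thesis using e2 by (simp add: field_simps)
  qed
  show "\<exists>M. \<forall>m\<ge>M. \<forall>n\<ge>M. dist (f m) (f n) < e"
  proof (intro exI allI impI)
    fix m n assume mn: "m \<ge> N" "n \<ge> N"
    have key: "norm (f a - f b)^2 < e^2" if "a \<le> b" "a \<ge> N" for a b
    proof -
      have "c * inverse (real (Suc a)) \<le> c * inverse (real (Suc N))"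
        using that c by (intro mult_left_mono) (auto simp: field_simps)
      then show ?thesis using h[OF that(1)] cN by linarith
    qed
    have "norm (f m - f n)^2 < e^2"
    proof (cases "m \<le> n")
      case True then show ?thesis using key mn by blast
    next
      case False then have "norm (f n - f m)^2 < e^2" using key mn by simp
      then show ?thesis by (simp add: norm_minus_commute)
    qed
    then show "dist (f m) (f n) < e" using e by (simp add: dist_norm power_less_imp_less_base)
  qed
qed

lemma nearest_point:
  fixes C :: "'a::{real_inner,complete_space} set"
  assumes cl: "closed C" and cv: "convex C" and ne: "C \<noteq> {}"
  shows "\<exists>q\<in>C. \<forall>c\<in>C. norm (y - q) \<le> norm (y - c)"
proof -
  define d where "d = Inf ((\<lambda>c. norm (y - c)^2) ` C)"
  have bdd: "bdd_below ((\<lambda>c. norm (y - c)^2) ` C)" by (rule bdd_belowI[of _ 0]) auto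
  have lb: "d \<le> norm (y - c)^2" if "c \<in> C" for c
    unfolding d_def by (rule cINF_lower[OF bdd that])
  have "\<exists>c\<in>C. norm (y - c)^2 < d + inverse (real (Suc n))" for n
  proof -
    have "Inf ((\<lambda>c. norm (y - c)^2) ` C) < d + inverse (real (Suc n))" unfolding d_def by simp
    then show ?thesis using cINF_less_iff[OF ne bdd] by blast
  qed
  then obtain cs where cs: "\<And>n. cs n \<in> C" "\<And>n. norm (y - cs n)^2 < d + inverse (real (Suc n))"
    by metis
  have mid: "(1/2) *\<^sub>R (a + b) \<in> C" if "a \<in> C" "b \<in> C" for a b
    using convexD[OF cv that, of "1/2" "1/2"] by (simp add: scaleR_add_right)
  have "Cauchy cs"
  proof (rule Cauchy_sq[of 4])
    fix m n :: nat assume mn: "m \<le> n"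
    have e: "norm (cs m - cs n)^2 = 2 * norm (y - cs m)^2 + 2 * norm (y - cs n)^2 - 4 * norm (y - (1/2) *\<^sub>R (cs m + cs n))^2"
    proof -
      have 1: "(y - cs n) - (y - cs m) = cs m - cs n" by simp
      have 2: "(1/2) *\<^sub>R ((y - cs n) + (y - cs m)) = y - (1/2) *\<^sub>R (cs m + cs n)"
        by (simp add: algebra_simps flip: scaleR_add_left)
      show ?thesis using para[of "y - cs n" "y - cs m"] unfolding 1 2 by simp
    qed
    have "d \<le> norm (y - (1/2) *\<^sub>R (cs m + cs n))^2" using lb mid cs by blast
    moreover have "inverse (real (Suc n)) \<le> inverse (real (Suc m))" using mn by (simp add: field_simps)
    ultimately show "norm (cs m - cs n)^2 \<le> 4 * inverse (real (Suc m))"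
      using e cs(2)[of m] cs(2)[of n] by linarith
  qed simp
  then obtain q where q: "cs \<longlonglongrightarrow> q" using Cauchy_convergent_iff convergent_def by blast
  have qC: "q \<in> C" using cl q cs(1) closed_sequential_limits by blast
  have "norm (y - q)^2 \<le> d"
  proof (rule LIMSEQ_le[of "\<lambda>n. norm (y - cs n)^2" _ "\<lambda>n. d + inverse (real (Suc n))"])
    show "(\<lambda>n. norm (y - cs n)^2) \<longlonglongrightarrow> norm (y - q)^2" by (intro tendsto_intros q)
    show "(\<lambda>n. d + inverse (real (Suc n))) \<longlonglongrightarrow> d"
      using tendsto_add[OF tendsto_const LIMSEQ_inverse_real_of_nat, of d] by simp
    show "\<exists>N. \<forall>n\<ge>N. norm (y - cs n)^2 \<le> d + inverse (real (Suc n))" using cs(2) less_imp_le by blast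
  qed
  then have "\<forall>c\<in>C. norm (y - q) \<le> norm (y - c)"
  proof (intro ballI)
    fix c assume "norm (y - q)^2 \<le> d" "c \<in> C"
    then have "norm (y - q)^2 \<le> norm (y - c)^2" using lb[of c] by linarith
    then show "norm (y - q) \<le> norm (y - c)" by (rule power2_le_imp_le) simp
  qed
  then show ?thesis using qC by blast
qed

lemma nearest_point_vi:
  fixes C :: "'a::real_inner set"
  assumes cv: "convex C" and qC: "q \<in> C" and near: "\<forall>c\<in>C. norm (y - q) \<le> norm (y - c)" and cC: "c \<in> C"
  shows "inner (y - q) (c - q) \<le> 0"
proof (rule ccontr)
  assume "\<not> ?thesis"
  then have dpos: "inner (y - q) (c - q) > 0" by simp
  define e where "e = c - q"
  define \<delta> where "\<delta> = inner (y - q) e"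
  have "e \<noteq> 0" using dpos e_def by auto
  then have ne: "norm e ^2 > 0" by simp
  define s where "s = min 1 (\<delta> / norm e^2)"
  have \<delta>pos: "\<delta> > 0" using dpos by (simp add: \<delta>_def e_def)
  have s0: "s > 0" "s \<le> 1" using \<delta>pos ne by (auto simp: s_def)
  have se: "s * norm e^2 \<le> \<delta>" using ne by (simp add: s_def min_def field_simps)
  have inC: "(1 - s) *\<^sub>R q + s *\<^sub>R c \<in> C" using convexD_alt[OF cv qC cC, of s] s0 by simp
  have eq: "y - ((1 - s) *\<^sub>R q + s *\<^sub>R c) = (y - q) - s *\<^sub>R e" by (simp add: e_def algebra_simps)
  have "norm ((y - q) - s *\<^sub>R e)^2 = norm (y - q)^2 - 2 * s * \<delta> + s * (s * norm e^2)"
    by (simp add: power2_norm_eq_inner inner_simps \<delta>_def algebra_simps inner_commute)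
  also have "\<dots> < norm (y - q)^2"
  proof -
    have "s * (s * norm e^2) \<le> s * \<delta>" using se s0 by (simp add: mult_left_mono)
    moreover have "s * \<delta> > 0" using s0 \<delta>pos by simp
    ultimately show ?thesis by linarith
  qed
  finally have "norm (y - ((1 - s) *\<^sub>R q + s *\<^sub>R c)) < norm (y - q)" unfolding eq
    by (rule power_less_imp_less_base) simp
  then show False using near inC by fastforce
qed

lemma proj_subspace:
  fixes D :: "'a::{real_inner,complete_space} set"
  assumes cl: "closed D" and sD: "subspace D"
  shows "\<exists>q\<in>D. \<forall>m\<in>D. inner (y - q) m = 0"
proof -
  have cv: "convex D" using sD by (simp add: subspace_imp_convex)
  have ne: "D \<noteq> {}" using sD subspace_0 by blast
  obtain q where qD: "q \<in> D" and near: "\<forall>c\<in>D. norm (y - q) \<le> norm (y - c)"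
    using nearest_point[OF cl cv ne] by blast
  have "inner (y - q) m = 0" if mD: "m \<in> D" for m
  proof -
    have "q + m \<in> D" "q - m \<in> D" using qD mD sD by (auto simp: subspace_add subspace_diff)
    from nearest_point_vi[OF cv qD near this(1)] nearest_point_vi[OF cv qD near this(2)]
    show ?thesis by (simp add: inner_diff_right)
  qed
  then show ?thesis using qD by blast
qed

lemma key_alg:
  fixes Y Bb :: "'i \<Rightarrow> 'a::real_inner"
  assumes fin: "finite I" and u0: "\<And>i. i \<in> I \<Longrightarrow> u i \<ge> 0" and u1: "sum u I = 1"
    and mono: "\<And>i j. i \<in> I \<Longrightarrow> j \<in> I \<Longrightarrow> inner (Y i - Y j) (Bb i - Bb j) \<ge> 0"
    and x0: "x0 = (\<Sum>i\<in>I. u i *\<^sub>R ((1/2) *\<^sub>R (z - Bb i + Y i)))"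
  shows "(\<Sum>i\<in>I. u i * inner (x0 - Y i) (x0 + Bb i - z)) \<le> 0"
proof -
  define yb where "yb = (\<Sum>i\<in>I. u i *\<^sub>R Y i)"
  define bb where "bb = (\<Sum>i\<in>I. u i *\<^sub>R Bb i)"
  define T where "T = (\<Sum>i\<in>I. u i * inner (Y i) (Bb i))"
  have sz: "(\<Sum>i\<in>I. u i *\<^sub>R z) = z" using u1 by (simp add: scaleR_sum_left[symmetric])
  have x0': "x0 = (1/2) *\<^sub>R (z - bb + yb)"
  proof -
    have "x0 = (1/2) *\<^sub>R (\<Sum>i\<in>I. u i *\<^sub>R z - u i *\<^sub>R Bb i + u i *\<^sub>R Y i)"
      unfolding x0 scaleR_sum_right by (intro sum.cong refl) (simp add: algebra_simps)
    also have "\<dots> = (1/2) *\<^sub>R (z - bb + yb)"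
      by (simp add: sum.distrib sum_subtractf sz bb_def yb_def)
    finally show ?thesis .
  qed
  define W where "W = (\<Sum>i\<in>I. \<Sum>j\<in>I. u i * u j * inner (Y i - Y j) (Bb i))"
  have W1: "W = T - inner yb bb"
  proof -
    have "(\<Sum>j\<in>I. u i * u j * inner (Y i - Y j) (Bb i)) = u i * inner (Y i) (Bb i) - u i * inner (\<Sum>j\<in>I. u j *\<^sub>R Y j) (Bb i)" for i
    proof -
      have "(\<Sum>j\<in>I. u i * u j * inner (Y i - Y j) (Bb i)) = (\<Sum>j\<in>I. u i * u j * inner (Y i) (Bb i) - u i * (u j * inner (Y j) (Bb i)))"
        by (intro sum.cong refl) (simp add: inner_diff_left algebra_simps)
      also have "\<dots> = u i * inner (Y i) (Bb i) * sum u I - u i * (\<Sum>j\<in>I. u j * inner (Y j) (Bb i))"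
        by (simp add: sum_subtractf sum_distrib_left sum_distrib_right algebra_simps)
      also have "\<dots> = u i * inner (Y i) (Bb i) - u i * inner (\<Sum>j\<in>I. u j *\<^sub>R Y j) (Bb i)"
        using u1 by (simp add: inner_sum_left)
      finally show ?thesis .
    qed
    then have "W = (\<Sum>i\<in>I. u i * inner (Y i) (Bb i) - u i * inner yb (Bb i))"
      unfolding W_def yb_def by simp
    also have "\<dots> = T - inner yb bb"
      by (simp add: T_def bb_def sum_subtractf inner_sum_right)
    finally show ?thesis .
  qed
  have W2: "2 * W = (\<Sum>i\<in>I. \<Sum>j\<in>I. u i * u j * inner (Y i - Y j) (Bb i - Bb j))"
  proof -
    have sw: "W = (\<Sum>i\<in>I. \<Sum>j\<in>I. u j * u i * inner (Y j - Y i) (Bb j))"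
      unfolding W_def by (rule sum.swap)
    have "2 * W = W + (\<Sum>i\<in>I. \<Sum>j\<in>I. u j * u i * inner (Y j - Y i) (Bb j))" using sw by simp
    also have "\<dots> = (\<Sum>i\<in>I. \<Sum>j\<in>I. u i * u j * inner (Y i - Y j) (Bb i) + u j * u i * inner (Y j - Y i) (Bb j))"
      unfolding W_def by (simp add: sum.distrib)
    also have "\<dots> = (\<Sum>i\<in>I. \<Sum>j\<in>I. u i * u j * inner (Y i - Y j) (Bb i - Bb j))"
      by (intro sum.cong refl) (simp add: inner_diff_left inner_diff_right algebra_simps)
    finally show ?thesis .
  qed
  have "(\<Sum>i\<in>I. \<Sum>j\<in>I. u i * u j * inner (Y i - Y j) (Bb i - Bb j)) \<ge> 0"
    using u0 mono by (intro sum_nonneg) simp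
  then have Wpos: "W \<ge> 0" using W2 by simp
  have S: "(\<Sum>i\<in>I. u i * inner (x0 - Y i) (x0 + Bb i - z))
      = inner x0 x0 + inner x0 bb - inner x0 z - inner yb x0 - T + inner yb z"
  proof -
    have "(\<Sum>i\<in>I. u i * inner (x0 - Y i) (x0 + Bb i - z))
       = (\<Sum>i\<in>I. u i * inner x0 x0 + u i * inner x0 (Bb i) - u i * inner x0 z - inner (u i *\<^sub>R Y i) x0
            - u i * inner (Y i) (Bb i) + inner (u i *\<^sub>R Y i) z)"
      by (intro sum.cong refl) (simp add: inner_diff_left inner_diff_right inner_add_right algebra_simps)
    also have "\<dots> = inner x0 x0 + inner x0 bb - inner x0 z - inner yb x0 - T + inner yb z"
      by (simp add: sum.distrib sum_subtractf sum_distrib_right[symmetric] u1 inner_sum_right inner_sum_left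
          bb_def yb_def T_def sum_distrib_left[symmetric] mult.commute)
    finally show ?thesis .
  qed
  have "inner x0 x0 + inner x0 bb - inner x0 z - inner yb x0 - T + inner yb z
        = - inner (x0 - yb) (x0 - yb) - (T - inner yb bb)"
    unfolding x0' by (simp add: inner_simps algebra_simps inner_commute)
  moreover have "inner (x0 - yb) (x0 - yb) \<ge> 0" by simp
  ultimately show ?thesis using S W1 Wpos by linarith
qed

lemma continuous_on_Max_fin:
  fixes f :: "'g \<Rightarrow> 'a::topological_space \<Rightarrow> real"
  assumes "finite F" "F \<noteq> {}" "\<And>g. g \<in> F \<Longrightarrow> continuous_on S (f g)"
  shows "continuous_on S (\<lambda>x. Max ((\<lambda>g. f g x) ` F))"
  using assms
proof (induction F rule: finite_ne_induct)
  case (singleton a) then show ?case by simp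
next
  case (insert a F)
  have "continuous_on S (\<lambda>x. max (f a x) (Max ((\<lambda>g. f g x) ` F)))"
    using insert by (intro continuous_on_max) auto
  then show ?case using insert by (simp add: Max_insert)
qed

lemma psi_shift:
  fixes x0 d y b z :: "'a::real_inner"
  shows "inner (x0 + t *\<^sub>R d - y) (x0 + t *\<^sub>R d + b - z)
    = inner (x0 - y) (x0 + b - z) + 2 * t * inner d (x0 - (1/2) *\<^sub>R (z - b + y)) + t^2 * inner d d"
  by (simp add: inner_simps algebra_simps inner_commute power2_eq_square)

lemma fin_ext:
  fixes F :: "('a::{real_inner,complete_space} \<times> 'a) set"
  assumes fin: "finite F"
    and mono: "\<And>g h. g \<in> F \<Longrightarrow> h \<in> F \<Longrightarrow> inner (fst g - fst h) (snd g - snd h) \<ge> 0"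
  shows "\<exists>x. \<forall>g\<in>F. inner (x - fst g) (z - x - snd g) \<ge> 0"
proof (cases "F = {}")
  case True then show ?thesis by simp
next
  case Fne: False
  define \<psi> where "\<psi> g x = inner (x - fst g) (x + snd g - z)" for g x
  define cc where "cc g = (1/2) *\<^sub>R (z - snd g + fst g)" for g
  define \<Phi> where "\<Phi> x = Max ((\<lambda>g. \<psi> g x) ` F)" for x
  define K where "K = convex hull (cc ` F)"
  have Kc: "compact K" unfolding K_def using fin by (simp add: finite_imp_compact_convex_hull)
  have Kne: "K \<noteq> {}" unfolding K_def using Fne by simp
  have Kcv: "convex K" unfolding K_def by simp
  have cont: "continuous_on K \<Phi>" unfolding \<Phi>_def
    using fin Fne by (intro continuous_on_Max_fin) (auto simp: \<psi>_def intro!: continuous_intros)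
  obtain x0 where x0K: "x0 \<in> K" and x0min: "\<And>y. y \<in> K \<Longrightarrow> \<Phi> x0 \<le> \<Phi> y"
    using continuous_attains_inf[OF Kc Kne cont] by blast
  define \<mu> where "\<mu> = \<Phi> x0"
  have psi_le: "\<psi> g x \<le> \<Phi> x" if "g \<in> F" for g x
    unfolding \<Phi>_def using fin that by (intro Max_ge) auto
  have "\<mu> \<le> 0"
  proof (rule ccontr)
    assume "\<not> \<mu> \<le> 0"
    then have mupos: "\<mu> > 0" by simp
    define Act where "Act = {g\<in>F. \<psi> g x0 = \<mu>}"
    have "\<mu> \<in> (\<lambda>g. \<psi> g x0) ` F" unfolding \<mu>_def \<Phi>_def using fin Fne by (intro Max_in) auto
    then have Actne: "Act \<noteq> {}" unfolding Act_def by auto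
    have Actfin: "finite Act" using fin unfolding Act_def by simp
    define C where "C = convex hull (cc ` Act)"
    have Cc: "compact C" unfolding C_def using Actfin by (simp add: finite_imp_compact_convex_hull)
    have Cne: "C \<noteq> {}" unfolding C_def using Actne by simp
    have Ccv: "convex C" unfolding C_def by simp
    have CK: "C \<subseteq> K" unfolding C_def K_def by (intro hull_mono image_mono) (auto simp: Act_def)
    have x0C: "x0 \<in> C"
    proof (rule ccontr)
      assume x0nC: "x0 \<notin> C"
      have "continuous_on C (\<lambda>w. norm (x0 - w))" by (intro continuous_intros)
      then obtain q where qC: "q \<in> C" and qmin: "\<And>w. w \<in> C \<Longrightarrow> norm (x0 - q) \<le> norm (x0 - w)"
        using continuous_attains_inf[OF Cc Cne] by blast
      have vi: "inner (x0 - q) (c - q) \<le> 0" if "c \<in> C" for c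
        using nearest_point_vi[OF Ccv qC _ that] qmin by blast
      define d where "d = q - x0"
      have dne: "d \<noteq> 0" using x0nC qC d_def by auto
      then have dd: "inner d d > 0" by simp
      have act_dec: "\<psi> g (x0 + t *\<^sub>R d) < \<mu>" if gA: "g \<in> Act" and t: "0 < t" "t < 1" for g t
      proof -
        have ccC: "cc g \<in> C" unfolding C_def using gA by (simp add: hull_inc)
        have "inner d (x0 - cc g) = - inner d d + inner (x0 - q) (cc g - q)"
          unfolding d_def by (simp add: inner_simps algebra_simps inner_commute)
        then have le: "inner d (x0 - cc g) \<le> - inner d d" using vi[OF ccC] by simp
        have "\<psi> g (x0 + t *\<^sub>R d) = \<mu> + 2 * t * inner d (x0 - cc g) + t^2 * inner d d"
          using gA unfolding \<psi>_def cc_def Act_def by (simp add: psi_shift)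
        also have "\<dots> \<le> \<mu> - 2 * t * inner d d + t^2 * inner d d"
          using mult_left_mono[OF le, of t] t by simp
        also have "\<dots> < \<mu>"
        proof -
          have "t^2 * inner d d < 2 * t * inner d d" using t dd by (simp add: power2_eq_square)
          then show ?thesis by simp
        qed
        finally show ?thesis .
      qed
      have ev1: "\<forall>\<^sub>F t in at_right 0. \<forall>g\<in>F - Act. \<psi> g (x0 + t *\<^sub>R d) < \<mu>"
      proof (rule eventually_ball_finite)
        show "finite (F - Act)" using fin by simp
        show "\<forall>g\<in>F - Act. \<forall>\<^sub>F t in at_right 0. \<psi> g (x0 + t *\<^sub>R d) < \<mu>"
        proof
          fix g assume g: "g \<in> F - Act"
          have lt: "\<psi> g x0 < \<mu>" using g psi_le[of g x0] unfolding Act_def \<mu>_def by auto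
          have "((\<lambda>t. \<psi> g (x0 + t *\<^sub>R d)) \<longlongrightarrow> \<psi> g (x0 + 0 *\<^sub>R d)) (at_right 0)"
            unfolding \<psi>_def by (intro tendsto_intros)
          then have "((\<lambda>t. \<psi> g (x0 + t *\<^sub>R d)) \<longlongrightarrow> \<psi> g x0) (at_right 0)" by simp
          from order_tendstoD(2)[OF this lt] show "\<forall>\<^sub>F t in at_right 0. \<psi> g (x0 + t *\<^sub>R d) < \<mu>" .
        qed
      qed
      have ev2: "\<forall>\<^sub>F t in at_right (0::real). t \<in> {0<..<1}" by (rule eventually_at_right_real) simp
      obtain t where t: "t \<in> {0<..<1}" and tF: "\<forall>g\<in>F - Act. \<psi> g (x0 + t *\<^sub>R d) < \<mu>"
        using eventually_happens[OF eventually_conj[OF ev2 ev1]] by auto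
      have allF: "\<forall>g\<in>F. \<psi> g (x0 + t *\<^sub>R d) < \<mu>" using tF act_dec t by auto
      have "\<Phi> (x0 + t *\<^sub>R d) < \<mu>" unfolding \<Phi>_def using fin Fne allF by simp
      moreover have "x0 + t *\<^sub>R d \<in> K"
      proof -
        have "x0 + t *\<^sub>R d = (1 - t) *\<^sub>R x0 + t *\<^sub>R q" by (simp add: d_def algebra_simps)
        then show ?thesis using convexD_alt[OF Kcv x0K, of q t] CK qC t by auto
      qed
      ultimately show False using x0min \<mu>_def by fastforce
    qed
    define I where "I = cc ` Act"
    have Ifin: "finite I" using Actfin I_def by simp
    obtain w where w0: "\<forall>p\<in>I. 0 \<le> w p" and w1: "sum w I = 1" and wx: "(\<Sum>p\<in>I. w p *\<^sub>R p) = x0"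
      using x0C unfolding C_def I_def convex_hull_finite[OF Ifin[unfolded I_def]] by blast
    define rep where "rep p = (SOME g. g \<in> Act \<and> cc g = p)" for p
    have rep: "rep p \<in> Act \<and> cc (rep p) = p" if "p \<in> I" for p
      unfolding rep_def using that I_def by (metis (mono_tags, lifting) imageE someI)
    have "(\<Sum>p\<in>I. w p * inner (x0 - fst (rep p)) (x0 + snd (rep p) - z)) \<le> 0"
    proof (rule key_alg[OF Ifin])
      show "\<And>i. i \<in> I \<Longrightarrow> 0 \<le> w i" using w0 by blast
      show "sum w I = 1" by (rule w1)
      show "\<And>i j. i \<in> I \<Longrightarrow> j \<in> I \<Longrightarrow> 0 \<le> inner (fst (rep i) - fst (rep j)) (snd (rep i) - snd (rep j))"
        using rep mono unfolding Act_def by blast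
      show "x0 = (\<Sum>i\<in>I. w i *\<^sub>R ((1/2) *\<^sub>R (z - snd (rep i) + fst (rep i))))"
        unfolding wx[symmetric] using rep unfolding cc_def by (intro sum.cong refl) metis
    qed
    moreover have "(\<Sum>p\<in>I. w p * inner (x0 - fst (rep p)) (x0 + snd (rep p) - z)) = (\<Sum>p\<in>I. w p * \<mu>)"
      using rep unfolding Act_def \<psi>_def by (intro sum.cong refl) auto
    moreover have "(\<Sum>p\<in>I. w p * \<mu>) = \<mu>" using w1 by (simp add: sum_distrib_right[symmetric])
    ultimately show False using mupos by simp
  qed
  have "inner (x0 - fst g) (z - x0 - snd g) \<ge> 0" if "g \<in> F" for g
  proof -
    have "\<psi> g x0 \<le> 0" using psi_le[OF that, of x0] \<open>\<mu> \<le> 0\<close> \<mu>_def by simp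
    moreover have "inner (x0 - fst g) (z - x0 - snd g) = - \<psi> g x0"
      unfolding \<psi>_def by (simp add: inner_simps algebra_simps)
    ultimately show ?thesis by simp
  qed
  then show ?thesis by blast
qed

lemma phi_rep:
  fixes x y b z :: "'a::real_inner"
  shows "inner (x - y) (z - x - b) = inner x (z - b + y) - inner x x - inner y (z - b)"
  by (simp add: inner_simps inner_commute algebra_simps)
lemma phi_mid:
  fixes u v y b z :: "'a::real_inner"
  shows "inner ((1/2) *\<^sub>R (u + v) - y) (z - (1/2) *\<^sub>R (u + v) - b)
     = (inner (u - y) (z - u - b) + inner (v - y) (z - v - b)) / 2 + inner (u - v) (u - v) / 4"
proof -
  have 1: "inner ((1/2) *\<^sub>R (u + v)) w = (inner u w + inner v w) / 2" for w by (simp add: inner_simps)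
  have 2: "inner ((1/2) *\<^sub>R (u + v)) ((1/2) *\<^sub>R (u + v)) = (inner u u + 2 * inner u v + inner v v) / 4"
    by (simp add: inner_simps inner_commute)
  have 3: "inner (u - v) (u - v) = inner u u - 2 * inner u v + inner v v"
    by (simp add: inner_simps inner_commute)
  show ?thesis by (simp only: phi_rep 2) (simp only: 1 3, simp add: field_simps)
qed

lemma phi_ball:
  fixes x y b z :: "'a::real_inner"
  assumes "inner (x - y) (z - x - b) \<ge> 0"
  shows "norm x ^ 2 \<le> 2 * (inner ((1/2) *\<^sub>R (z - b + y)) ((1/2) *\<^sub>R (z - b + y)) - inner y (z - b))
      + 2 * norm ((1/2) *\<^sub>R (z - b + y))^2"
proof -
  define c where "c = (1/2) *\<^sub>R (z - b + y)"
  have e: "inner (x - y) (z - x - b) = inner c c - inner y (z - b) - inner (x - c) (x - c)"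
    unfolding c_def by (simp add: inner_simps algebra_simps inner_commute)
  have eq: "2 * inner (x - c) (x - c) + 2 * inner c c - inner x x = inner (x - 2 *\<^sub>R c) (x - 2 *\<^sub>R c)"
    by (simp add: inner_simps inner_commute algebra_simps)
  have "0 \<le> inner (x - 2 *\<^sub>R c) (x - 2 *\<^sub>R c)" by simp
  then have p: "norm x ^2 \<le> 2 * norm (x - c)^2 + 2 * norm c ^2"
    using eq unfolding power2_norm_eq_inner by linarith
  show ?thesis using assms e p unfolding c_def[symmetric] by (simp add: power2_norm_eq_inner)
qed

lemma one_point_ext:
  fixes G :: "('a::{real_inner,complete_space} \<times> 'a) set"
  assumes mono: "\<And>g h. g \<in> G \<Longrightarrow> h \<in> G \<Longrightarrow> inner (fst g - fst h) (snd g - snd h) \<ge> 0"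
  shows "\<exists>p. \<forall>g\<in>G. inner (p - fst g) (z - p - snd g) \<ge> 0"
proof (cases "G = {}")
  case True then show ?thesis by simp
next
  case False
  then obtain g0 where g0: "g0 \<in> G" by blast
  define \<phi> where "\<phi> g x = inner (x - fst g) (z - x - snd g)" for g x
  define S where "S F = {x. \<forall>g\<in>F. \<phi> g x \<ge> 0}" for F
  define FF where "FF = {F. finite F \<and> F \<subseteq> G \<and> g0 \<in> F}"
  define R2 where "R2 = 2 * (inner ((1/2) *\<^sub>R (z - snd g0 + fst g0)) ((1/2) *\<^sub>R (z - snd g0 + fst g0)) - inner (fst g0) (z - snd g0))
      + 2 * norm ((1/2) *\<^sub>R (z - snd g0 + fst g0))^2"
  have Sne: "S F \<noteq> {}" if "F \<in> FF" for F
  proof -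
    have "finite F" "F \<subseteq> G" using that FF_def by auto
    then obtain x where "\<forall>g\<in>F. inner (x - fst g) (z - x - snd g) \<ge> 0"
      using fin_ext[of F z] mono by blast
    then show ?thesis unfolding S_def \<phi>_def by blast
  qed
  have Sbd: "norm x ^2 \<le> R2" if "F \<in> FF" "x \<in> S F" for F x
  proof -
    have "\<phi> g0 x \<ge> 0" using that unfolding FF_def S_def by auto
    then show ?thesis unfolding R2_def \<phi>_def by (rule phi_ball)
  qed
  have Smid: "(1/2) *\<^sub>R (u + v) \<in> S F" if "u \<in> S F" "v \<in> S F" for F u v
  proof -
    have "\<phi> g ((1/2) *\<^sub>R (u + v)) \<ge> 0" if g: "g \<in> F" for g
    proof -
      have "\<phi> g u \<ge> 0" "\<phi> g v \<ge> 0" using g \<open>u \<in> S F\<close> \<open>v \<in> S F\<close> unfolding S_def by auto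
      moreover have "inner (u - v) (u - v) \<ge> 0" by simp
      ultimately show ?thesis unfolding \<phi>_def phi_mid by simp
    qed
    then show ?thesis unfolding S_def by blast
  qed
  have Santi: "S F' \<subseteq> S F" if "F \<subseteq> F'" for F F' using that unfolding S_def by auto
  define m where "m F = Inf ((\<lambda>x. norm x ^2) ` S F)" for F
  have bddb: "bdd_below ((\<lambda>x. norm x ^2) ` S F)" for F by (rule bdd_belowI[of _ 0]) auto
  have mlow: "m F \<le> norm x ^2" if "x \<in> S F" for F x
    unfolding m_def by (rule cINF_lower[OF bddb that])
  have mapx: "\<exists>x\<in>S F. norm x ^2 < m F + e" if "F \<in> FF" "e > 0" for F e
  proof -
    have "Inf ((\<lambda>x. norm x ^2) ` S F) < m F + e" using that unfolding m_def by simp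
    then show ?thesis using cINF_less_iff[OF Sne[OF that(1)] bddb] by blast
  qed
  have mR: "m F \<le> R2" if FFF: "F \<in> FF" for F
  proof -
    obtain x where "x \<in> S F" using Sne[OF FFF] by blast
    then show ?thesis using mlow Sbd FFF by (meson order_trans)
  qed
  have mmono: "m F \<le> m F'" if "F' \<in> FF" "F \<subseteq> F'" for F F'
    unfolding m_def using Sne[OF that(1)] bddb Santi[OF that(2)]
    by (intro cInf_superset_mono) auto
  have pairb: "norm (u - v)^2 \<le> 2 * norm u^2 + 2 * norm v^2 - 4 * m F" if "u \<in> S F" "v \<in> S F" for F u v
    using para[of u v] mlow[OF Smid[OF that]] by linarith
  define M where "M = Sup (m ` FF)"
  have "{g0} \<in> FF" unfolding FF_def using g0 by auto
  then have FFne: "FF \<noteq> {}" by blast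
  have bdda: "bdd_above (m ` FF)" using mR by (intro bdd_aboveI[of _ R2]) auto
  have mM: "m F \<le> M" if "F \<in> FF" for F unfolding M_def using bdda that by (rule cSUP_upper2) simp
  have "\<exists>F\<in>FF. M - inverse (real (Suc n)) < m F" for n
  proof -
    have "M - inverse (real (Suc n)) < Sup (m ` FF)" unfolding M_def by simp
    then show ?thesis using less_cSUP_iff[OF FFne bdda] by blast
  qed
  then obtain Fs where Fs: "\<And>n. Fs n \<in> FF" "\<And>n. M - inverse (real (Suc n)) < m (Fs n)" by metis
  define Fn where "Fn n = (\<Union>j\<le>n. Fs j)" for n
  have FnFF: "Fn n \<in> FF" for n using Fs(1) unfolding Fn_def FF_def by auto
  have Fnmono: "Fn n \<subseteq> Fn k" if "n \<le> k" for n k using that unfolding Fn_def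
    by (intro UN_mono) auto
  have FnM: "M < m (Fn n) + inverse (real (Suc n))" for n
  proof -
    have "m (Fs n) \<le> m (Fn n)" using FnFF by (intro mmono) (auto simp: Fn_def)
    then show ?thesis using Fs(2)[of n] by linarith
  qed
  define e where "e n = inverse (real (Suc n))" for n
  have epos: "e n > 0" for n unfolding e_def by simp
  have emono: "e k \<le> e n" if "n \<le> k" for n k unfolding e_def using that by (simp add: field_simps)
  have "\<exists>x\<in>S (Fn n). norm x^2 < m (Fn n) + e n" for n using mapx[OF FnFF epos] .
  then obtain xs where xs: "\<And>n. xs n \<in> S (Fn n)" "\<And>n. norm (xs n)^2 < m (Fn n) + e n"
    by metis
  have "Cauchy xs"
  proof (rule Cauchy_sq[of 6])
    fix n k :: nat assume nk: "n \<le> k"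
    have xk: "xs k \<in> S (Fn n)" using xs(1)[of k] Santi[OF Fnmono[OF nk]] by blast
    have "norm (xs n - xs k)^2 \<le> 2 * norm (xs n)^2 + 2 * norm (xs k)^2 - 4 * m (Fn n)"
      by (rule pairb[OF xs(1) xk])
    moreover have "m (Fn k) \<le> M" using mM FnFF by blast
    ultimately show "norm (xs n - xs k)^2 \<le> 6 * inverse (real (Suc n))"
      using xs(2)[of n] xs(2)[of k] FnM[of n] emono[OF nk] unfolding e_def by linarith
  qed simp
  then obtain p where p: "xs \<longlonglongrightarrow> p" using Cauchy_convergent_iff convergent_def by blast
  have "\<phi> g p \<ge> 0" if gG: "g \<in> G" for g
  proof -
    have F'FF: "insert g (Fn n) \<in> FF" for n using FnFF[of n] gG unfolding FF_def by auto
    have "\<exists>x\<in>S (insert g (Fn n)). norm x^2 < m (insert g (Fn n)) + e n" for n using mapx[OF F'FF epos] .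
    then obtain ys where ys: "\<And>n. ys n \<in> S (insert g (Fn n))" "\<And>n. norm (ys n)^2 < m (insert g (Fn n)) + e n"
      by metis
    have ysg: "\<phi> g (ys n) \<ge> 0" for n using ys(1)[of n] unfolding S_def by auto
    have bnd: "norm (ys n - xs n)^2 \<le> 6 * e n" for n
    proof -
      have yn: "ys n \<in> S (Fn n)" using ys(1)[of n] Santi[of "Fn n" "insert g (Fn n)"] by blast
      have "norm (ys n - xs n)^2 \<le> 2 * norm (ys n)^2 + 2 * norm (xs n)^2 - 4 * m (Fn n)"
        by (rule pairb[OF yn xs(1)])
      moreover have "m (insert g (Fn n)) \<le> M" using mM F'FF by blast
      ultimately show ?thesis using xs(2)[of n] ys(2)[of n] FnM[of n] unfolding e_def by linarith
    qed
    have "(\<lambda>n. norm (ys n - xs n)) \<longlonglongrightarrow> 0"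
    proof (rule tendsto_sandwich[of "\<lambda>n. 0" _ _ "\<lambda>n. sqrt (6 * e n)"])
      show "\<forall>\<^sub>F n in sequentially. 0 \<le> norm (ys n - xs n)" by simp
      show "\<forall>\<^sub>F n in sequentially. norm (ys n - xs n) \<le> sqrt (6 * e n)"
        using bnd by (intro always_eventually allI) (simp add: real_le_rsqrt)
      show "(\<lambda>n. 0) \<longlonglongrightarrow> (0::real)" by simp
      have "(\<lambda>n. sqrt (6 * e n)) \<longlonglongrightarrow> sqrt (6 * 0)"
        unfolding e_def by (intro tendsto_intros LIMSEQ_inverse_real_of_nat)
      then show "(\<lambda>n. sqrt (6 * e n)) \<longlonglongrightarrow> 0" by simp
    qed
    then have "(\<lambda>n. ys n - xs n) \<longlonglongrightarrow> 0" by (rule tendsto_norm_zero_cancel)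
    then have "(\<lambda>n. xs n + (ys n - xs n)) \<longlonglongrightarrow> p + 0" using p by (intro tendsto_add)
    then have ysp: "ys \<longlonglongrightarrow> p" by simp
    have "(\<lambda>n. \<phi> g (ys n)) \<longlonglongrightarrow> \<phi> g p" unfolding \<phi>_def by (intro tendsto_intros ysp)
    then show ?thesis using ysg by (intro LIMSEQ_le_const[of _ _ 0]) auto
  qed
  then show ?thesis unfolding \<phi>_def by blast
qed

lemma resolvent_exists:
  fixes A :: "'a::{real_inner,complete_space} \<Rightarrow> 'a set"
  assumes mm: "maximally_monotone A" and lam: "lam > 0"
  shows "\<exists>x. (1/lam) *\<^sub>R (z - x) \<in> A x"
proof -
  have monA: "monotone_op A" using mm unfolding maximally_monotone_def by blast
  define G where "G = {(y, lam *\<^sub>R b) | y b. b \<in> A y}"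
  have "\<exists>p. \<forall>g\<in>G. inner (p - fst g) (z - p - snd g) \<ge> 0"
  proof (rule one_point_ext)
    fix g h assume "g \<in> G" "h \<in> G"
    then obtain y b y' b' where g: "g = (y, lam *\<^sub>R b)" "b \<in> A y" and h: "h = (y', lam *\<^sub>R b')" "b' \<in> A y'"
      unfolding G_def by blast
    have "0 \<le> inner (y - y') (b - b')" using monA g h unfolding monotone_op_def by blast
    then have "0 \<le> lam * inner (y - y') (b - b')" using lam by simp
    then show "0 \<le> inner (fst g - fst h) (snd g - snd h)" using g h
      by (simp add: inner_diff_right right_diff_distrib)
  qed
  then obtain p where p: "\<And>y b. b \<in> A y \<Longrightarrow> inner (p - y) (z - p - lam *\<^sub>R b) \<ge> 0"
    unfolding G_def by fastforce
  define a where "a = (1/lam) *\<^sub>R (z - p)"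
  have pa: "inner (p - y) (a - b) \<ge> 0" if "b \<in> A y" for y b
  proof -
    have "a - b = (1/lam) *\<^sub>R (z - p - lam *\<^sub>R b)" using lam unfolding a_def by (simp add: algebra_simps)
    then have "inner (p - y) (a - b) = (1/lam) * inner (p - y) (z - p - lam *\<^sub>R b)" by simp
    then show ?thesis using p[OF that] lam by simp
  qed
  define A' where "A' u = (if u = p then insert a (A u) else A u)" for u
  have "monotone_op A'"
    unfolding monotone_op_def
  proof (intro allI impI)
    fix x y u v assume u: "u \<in> A' x" and v: "v \<in> A' y"
    show "0 \<le> inner (x - y) (u - v)"
    proof (cases "x = p \<and> u = a")
      case True
      show ?thesis
      proof (cases "y = p \<and> v = a")
        case True then show ?thesis using \<open>x = p \<and> u = a\<close> by simp
      next
        case False then have "v \<in> A y" using v unfolding A'_def by (auto split: if_splits)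
        then show ?thesis using pa True by simp
      qed
    next
      case False then have uA: "u \<in> A x" using u unfolding A'_def by (auto split: if_splits)
      show ?thesis
      proof (cases "y = p \<and> v = a")
        case True
        have "0 \<le> inner (p - x) (a - u)" using pa[OF uA] .
        then show ?thesis using True by (simp add: inner_diff_left inner_diff_right algebra_simps)
      next
        case False then have "v \<in> A y" using v unfolding A'_def by (auto split: if_splits)
        then show ?thesis using uA monA unfolding monotone_op_def by blast
      qed
    qed
  qed
  moreover have "\<forall>u. A u \<subseteq> A' u" unfolding A'_def by auto
  ultimately have "A' = A" using mm unfolding maximally_monotone_def by blast
  then have "a \<in> A p" by (metis A'_def insertI1)
  then show ?thesis unfolding a_def by blast
qed

lemma resolvent_char:
  fixes A :: "'a::{real_inner,complete_space} \<Rightarrow> 'a set"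
  assumes mm: "maximally_monotone A" and lam: "lam > 0"
  shows "(1/lam) *\<^sub>R (z - resolvent lam A z) \<in> A (resolvent lam A z)"
proof -
  have monA: "monotone_op A" using mm unfolding maximally_monotone_def by blast
  have P: "z \<in> (\<lambda>u. x + lam *\<^sub>R u) ` A x \<longleftrightarrow> (1/lam) *\<^sub>R (z - x) \<in> A x" for x
  proof
    assume "z \<in> (\<lambda>u. x + lam *\<^sub>R u) ` A x"
    then obtain u where "u \<in> A x" "z = x + lam *\<^sub>R u" by blast
    then show "(1/lam) *\<^sub>R (z - x) \<in> A x" using lam by simp
  next
    assume h: "(1/lam) *\<^sub>R (z - x) \<in> A x"
    have "z = x + lam *\<^sub>R ((1/lam) *\<^sub>R (z - x))" using lam by simp
    then show "z \<in> (\<lambda>u. x + lam *\<^sub>R u) ` A x" using h by blast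
  qed
  have ex1: "\<exists>!x. z \<in> (\<lambda>u. x + lam *\<^sub>R u) ` A x"
  proof -
    obtain x where x: "(1/lam) *\<^sub>R (z - x) \<in> A x" using resolvent_exists[OF mm lam] by blast
    moreover have "x' = x" if "(1/lam) *\<^sub>R (z - x') \<in> A x'" for x'
    proof -
      have "0 \<le> inner (x' - x) ((1/lam) *\<^sub>R (z - x') - (1/lam) *\<^sub>R (z - x))"
        using monA that x unfolding monotone_op_def by blast
      also have "\<dots> = - (1/lam) * inner (x' - x) (x' - x)"
      proof -
        have e: "(1/lam) *\<^sub>R (z - x') - (1/lam) *\<^sub>R (z - x) = (- (1/lam)) *\<^sub>R (x' - x)"
          by (simp add: algebra_simps)
        show ?thesis by (simp only: e inner_scaleR_right)
      qed
      finally have "inner (x' - x) (x' - x) / lam \<le> 0" by simp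
      then have "inner (x' - x) (x' - x) \<le> 0" using lam by (simp add: divide_le_0_iff)
      then show ?thesis by (metis inner_gt_zero_iff not_le right_minus_eq)
    qed
    ultimately show ?thesis using P by blast
  qed
  have "z \<in> (\<lambda>u. resolvent lam A z + lam *\<^sub>R u) ` A (resolvent lam A z)"
    unfolding resolvent_def by (rule theI'[OF ex1])
  then show ?thesis using P by blast
qed

lemma resolvent_nonexp:
  fixes A :: "'a::{real_inner,complete_space} \<Rightarrow> 'a set"
  assumes mm: "maximally_monotone A" and lam: "lam > 0"
  shows "norm (resolvent lam A z1 - resolvent lam A z2) \<le> norm (z1 - z2)"
proof -
  have monA: "monotone_op A" using mm unfolding maximally_monotone_def by blast
  define r1 where "r1 = resolvent lam A z1"
  define r2 where "r2 = resolvent lam A z2"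
  have "0 \<le> inner (r1 - r2) ((1/lam) *\<^sub>R (z1 - r1) - (1/lam) *\<^sub>R (z2 - r2))"
    using monA resolvent_char[OF mm lam, of z1] resolvent_char[OF mm lam, of z2]
    unfolding monotone_op_def r1_def r2_def by blast
  also have "\<dots> = (1/lam) * (inner (r1 - r2) (z1 - z2) - inner (r1 - r2) (r1 - r2))"
  proof -
    have e: "(1/lam) *\<^sub>R (z1 - r1) - (1/lam) *\<^sub>R (z2 - r2) = (1/lam) *\<^sub>R ((z1 - z2) - (r1 - r2))"
      by (simp add: algebra_simps)
    show ?thesis by (simp only: e inner_scaleR_right inner_diff_right)
  qed
  finally have "0 \<le> (inner (r1 - r2) (z1 - z2) - inner (r1 - r2) (r1 - r2)) / lam" by simp
  then have "inner (r1 - r2) (r1 - r2) \<le> inner (r1 - r2) (z1 - z2)" using lam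
    by (simp add: zero_le_divide_iff)
  also have "\<dots> \<le> norm (r1 - r2) * norm (z1 - z2)" by (rule norm_cauchy_schwarz)
  finally have "norm (r1 - r2) * norm (r1 - r2) \<le> norm (r1 - r2) * norm (z1 - z2)"
    by (simp add: power2_norm_eq_inner[symmetric] power2_eq_square)
  then show ?thesis unfolding r1_def[symmetric] r2_def[symmetric]
    by (cases "norm (r1 - r2) = 0") (auto simp: mult_le_cancel_left)
qed

lemma zero_char:
  fixes A :: "'a::{real_inner,complete_space} \<Rightarrow> 'a set"
  assumes mm: "maximally_monotone A" and Blip: "L-lipschitz_on UNIV B" and Lpos: "L > 0"
    and h: "\<And>u a. a \<in> A u \<Longrightarrow> inner (u - p) (a + B u) \<ge> 0"
  shows "p \<in> zeros_sum A B"
proof -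
  define lam where "lam = 1 / (2 * L)"
  have lam: "lam > 0" using Lpos by (simp add: lam_def)
  define T where "T x = resolvent lam A (p - lam *\<^sub>R B x)" for x
  have "dist (T x) (T y) \<le> (1/2) * dist x y" for x y
  proof -
    have "dist (T x) (T y) \<le> norm ((p - lam *\<^sub>R B x) - (p - lam *\<^sub>R B y))"
      unfolding T_def dist_norm by (rule resolvent_nonexp[OF mm lam])
    also have "\<dots> = lam * norm (B x - B y)"
    proof -
      have e: "(p - lam *\<^sub>R B x) - (p - lam *\<^sub>R B y) = lam *\<^sub>R (B y - B x)" by (simp add: algebra_simps)
      show ?thesis unfolding e using lam by (simp add: norm_minus_commute)
    qed
    also have "\<dots> \<le> lam * (L * norm (x - y))"
      using Blip lam unfolding lipschitz_on_def dist_norm by (intro mult_left_mono) auto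
    also have "\<dots> = (1/2) * dist x y" using Lpos by (simp add: lam_def dist_norm)
    finally show ?thesis .
  qed
  then obtain x where fx: "T x = x" using banach_fix_type[of "1/2" T] by auto
  define a where "a = (1/lam) *\<^sub>R ((p - lam *\<^sub>R B x) - x)"
  have aA: "a \<in> A x" using resolvent_char[OF mm lam, of "p - lam *\<^sub>R B x"] fx unfolding T_def a_def by simp
  have aB: "a + B x = (1/lam) *\<^sub>R (p - x)" using lam unfolding a_def by (simp add: algebra_simps)
  have "0 \<le> inner (x - p) (a + B x)" by (rule h[OF aA])
  also have "\<dots> = - (1/lam) * inner (x - p) (x - p)" unfolding aB
    by (simp add: inner_diff_right inner_commute algebra_simps)
  finally have "inner (x - p) (x - p) / lam \<le> 0" by simp
  then have "inner (x - p) (x - p) \<le> 0" using lam by (simp add: divide_le_0_iff)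
  then have xp: "x = p" by (metis inner_gt_zero_iff not_le right_minus_eq)
  then have "a + B p = 0" using aB by simp
  then show ?thesis using aA xp unfolding zeros_sum_def by blast
qed

lemma weak_compact:
  fixes x :: "nat \<Rightarrow> 'a::{real_inner,complete_space}"
  assumes bnd: "\<And>n. norm (x n) \<le> C"
  shows "\<exists>r p. strict_mono r \<and> weakly_converges_to (x \<circ> r) p"
proof -
  have C0: "C \<ge> 0" using bnd[of 0] norm_ge_zero[of "x 0"] by linarith
  have ibnd: "\<bar>inner (x n) y\<bar> \<le> C * norm y" for n y
    using Cauchy_Schwarz_ineq2[of "x n" y] bnd[of n] by (meson mult_right_mono norm_ge_zero order_trans)
  define P where "P m r = convergent (\<lambda>j. inner (x (r j)) (x m))" for m and r :: "nat \<Rightarrow> nat"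
  interpret S: subseqs P
  proof
    fix m and s :: "nat \<Rightarrow> nat" assume "strict_mono s"
    have "bounded (range (\<lambda>j. inner (x (s j)) (x m)))"
      unfolding bounded_iff using ibnd by (intro exI[of _ "C * norm (x m)"]) auto
    then obtain l r where r: "strict_mono r" "((\<lambda>j. inner (x (s j)) (x m)) \<circ> r) \<longlonglongrightarrow> l"
      using bounded_imp_convergent_subsequence by blast
    then show "\<exists>r'. strict_mono r' \<and> P m (s \<circ> r')"
      unfolding P_def convergent_def by (intro exI[of _ r]) (auto simp: o_def)
  qed
  define z where "z = x \<circ> S.diagseq"
  have Pk: "convergent (\<lambda>j. inner (z j) (x k))" for k
  proof -
    have "P k (S.diagseq \<circ> ((+) (Suc k)))"
    proof (rule S.diagseq_holds)
      fix r s n assume "strict_mono (r :: nat \<Rightarrow> nat)" "P n s"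
      then show "P n (s \<circ> r)" unfolding P_def using convergent_subseq_convergent[of _ r]
        by (auto simp: o_def)
    qed
    then have "convergent (\<lambda>j. inner (z (j + Suc k)) (x k))" unfolding P_def z_def by (simp add: o_def add.commute)
    then obtain L where "(\<lambda>j. inner (z (j + Suc k)) (x k)) \<longlonglongrightarrow> L" unfolding convergent_def by blast
    then have "(\<lambda>j. inner (z j) (x k)) \<longlonglongrightarrow> L" by (rule LIMSEQ_offset)
    then show ?thesis unfolding convergent_def by blast
  qed
  define D where "D = {y. convergent (\<lambda>j. inner (z j) y)}"
  have zbnd: "norm (z j) \<le> C" for j unfolding z_def using bnd by simp
  have zibnd: "\<bar>inner (z n) y\<bar> \<le> C * norm y" for n y unfolding z_def using ibnd by simp
  have sD: "subspace D"
    unfolding subspace_def D_def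
  proof (intro conjI ballI allI; clarify?)
    show "convergent (\<lambda>j. inner (z j) 0)" by (simp add: convergent_const)
  next
    fix a b assume "convergent (\<lambda>j. inner (z j) a)" "convergent (\<lambda>j. inner (z j) b)"
    then show "convergent (\<lambda>j. inner (z j) (a + b))" by (simp add: inner_add_right convergent_add)
  next
    fix c a assume "convergent (\<lambda>j. inner (z j) a)"
    then obtain l where "(\<lambda>j. inner (z j) a) \<longlonglongrightarrow> l" unfolding convergent_def by blast
    then have "(\<lambda>j. c * inner (z j) a) \<longlonglongrightarrow> c * l" by (intro tendsto_intros)
    then show "convergent (\<lambda>j. inner (z j) (c *\<^sub>R a))" unfolding convergent_def by auto
  qed
  have clD: "closed D"
    unfolding closed_sequential_limits
  proof (intro allI impI, elim conjE)
    fix ys y assume ysD: "\<forall>n. ys n \<in> D" and ysy: "ys \<longlonglongrightarrow> y"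
    have "Cauchy (\<lambda>j. inner (z j) y)"
    proof (rule metric_CauchyI)
      fix e :: real assume e: "e > 0"
      define d where "d = e / (3 * (C + 1))"
      have d: "d > 0" using e C0 by (simp add: d_def)
      obtain k where k: "norm (ys k - y) < d"
        using ysy d unfolding LIMSEQ_iff by (metis dist_norm order_refl dist_commute)
      have "Cauchy (\<lambda>j. inner (z j) (ys k))" using ysD unfolding D_def by (simp add: Cauchy_convergent_iff)
      then obtain N where N: "\<And>m n. m \<ge> N \<Longrightarrow> n \<ge> N \<Longrightarrow> dist (inner (z m) (ys k)) (inner (z n) (ys k)) < e/3"
        using e unfolding Cauchy_def by (metis zero_less_divide_iff zero_less_numeral)
      have Cd: "C * d < e / 3" using C0 e unfolding d_def by (simp add: field_simps)
      show "\<exists>M. \<forall>m\<ge>M. \<forall>n\<ge>M. dist (inner (z m) y) (inner (z n) y) < e"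
      proof (intro exI allI impI)
        fix m n assume mn: "m \<ge> N" "n \<ge> N"
        have 1: "\<bar>inner (z m) (y - ys k)\<bar> \<le> C * d" using zibnd[of m "y - ys k"] k C0
          by (smt (verit) mult_left_mono norm_minus_commute)
        have 2: "\<bar>inner (z n) (y - ys k)\<bar> \<le> C * d" using zibnd[of n "y - ys k"] k C0
          by (smt (verit) mult_left_mono norm_minus_commute)
        have 3: "\<bar>inner (z m) (ys k) - inner (z n) (ys k)\<bar> < e/3" using N[OF mn] by (simp add: dist_real_def)
        have "inner (z m) y - inner (z n) y = inner (z m) (y - ys k) - inner (z n) (y - ys k) + (inner (z m) (ys k) - inner (z n) (ys k))"
          by (simp add: inner_diff_right)
        then show "dist (inner (z m) y) (inner (z n) y) < e" unfolding dist_real_def using 1 2 3 Cd by linarith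
      qed
    qed
    then show "y \<in> D" unfolding D_def by (simp add: Cauchy_convergent_iff)
  qed
  have allD: "y \<in> D" for y
  proof -
    obtain q where qD: "q \<in> D" and q: "\<And>m. m \<in> D \<Longrightarrow> inner (y - q) m = 0"
      using proj_subspace[OF clD sD, of y] by blast
    have xD: "x k \<in> D" for k unfolding D_def using Pk by simp
    have "inner (z j) (y - q) = 0" for j
      using q[OF xD[of "S.diagseq j"]] unfolding z_def by (simp add: inner_commute)
    then have "y - q \<in> D" unfolding D_def by (simp add: convergent_const)
    then have "q + (y - q) \<in> D" using qD sD by (metis subspace_add)
    then show ?thesis by simp
  qed
  define lf where "lf y = lim (\<lambda>j. inner (z j) y)" for y
  have lt: "(\<lambda>j. inner (z j) y) \<longlonglongrightarrow> lf y" for y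
    using allD[of y] unfolding D_def lf_def by (simp add: convergent_LIMSEQ_iff)
  have ldiff: "lf (a - b) = lf a - lf b" for a b
  proof -
    have "(\<lambda>j. inner (z j) (a - b)) \<longlonglongrightarrow> lf a - lf b"
      unfolding inner_diff_right by (intro tendsto_intros lt)
    then show ?thesis using lt LIMSEQ_unique by blast
  qed
  have ladd: "lf (a + b) = lf a + lf b" for a b
  proof -
    have "(\<lambda>j. inner (z j) (a + b)) \<longlonglongrightarrow> lf a + lf b"
      unfolding inner_add_right by (intro tendsto_intros lt)
    then show ?thesis using lt LIMSEQ_unique by blast
  qed
  have lscale: "lf (c *\<^sub>R a) = c * lf a" for c a
  proof -
    have "(\<lambda>j. inner (z j) (c *\<^sub>R a)) \<longlonglongrightarrow> c * lf a"
      unfolding inner_scaleR_right by (intro tendsto_intros lt)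
    then show ?thesis using lt LIMSEQ_unique by blast
  qed
  have l0: "lf 0 = 0" using lscale[of 0 0] by simp
  have lbnd: "\<bar>lf y\<bar> \<le> C * norm y" for y
  proof (rule LIMSEQ_le_const2[of "\<lambda>j. \<bar>inner (z j) y\<bar>"])
    show "(\<lambda>j. \<bar>inner (z j) y\<bar>) \<longlonglongrightarrow> \<bar>lf y\<bar>" by (intro tendsto_intros lt)
    show "\<exists>N. \<forall>n\<ge>N. \<bar>inner (z n) y\<bar> \<le> C * norm y" using zibnd by blast
  qed
  have "\<exists>p. \<forall>y. lf y = inner p y"
  proof (cases "\<forall>y. lf y = 0")
    case True then show ?thesis by (intro exI[of _ 0]) simp
  next
    case False
    then obtain y0 where y0: "lf y0 \<noteq> 0" by blast
    define N where "N = {y. lf y = 0}"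
    have sN: "subspace N" unfolding subspace_def N_def
      using ladd lscale l0 by simp
    have clN: "closed N"
      unfolding closed_sequential_limits
    proof (intro allI impI, elim conjE)
      fix ys y assume ysN: "\<forall>n. ys n \<in> N" and ysy: "ys \<longlonglongrightarrow> y"
      have "\<bar>lf y\<bar> \<le> 0"
      proof (rule LIMSEQ_le_const[of "\<lambda>n. C * norm (y - ys n)"])
        have "(\<lambda>n. C * norm (y - ys n)) \<longlonglongrightarrow> C * norm (y - y)" by (intro tendsto_intros ysy)
        then show "(\<lambda>n. C * norm (y - ys n)) \<longlonglongrightarrow> 0" by simp
        show "\<exists>N. \<forall>n\<ge>N. \<bar>lf y\<bar> \<le> C * norm (y - ys n)"
        proof (intro exI allI impI)
          fix n
          have "lf (y - ys n) = lf y" using ysN ldiff unfolding N_def by simp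
          then show "\<bar>lf y\<bar> \<le> C * norm (y - ys n)" using lbnd[of "y - ys n"] by simp
        qed
      qed
      then show "y \<in> N" unfolding N_def by simp
    qed
    obtain q where qN: "q \<in> N" and q: "\<And>m. m \<in> N \<Longrightarrow> inner (y0 - q) m = 0"
      using proj_subspace[OF clN sN, of y0] by blast
    define e where "e = y0 - q"
    have le: "lf e = lf y0" using qN ldiff unfolding e_def N_def by simp
    have ene: "e \<noteq> 0" using le y0 l0 by auto
    have ee: "inner e e > 0" using ene by simp
    have rep: "lf y = inner ((lf e / inner e e) *\<^sub>R e) y" for y
    proof -
      have "y - (lf y / lf e) *\<^sub>R e \<in> N" unfolding N_def using le y0 by (simp add: ldiff lscale)
      then have "inner e (y - (lf y / lf e) *\<^sub>R e) = 0" using q unfolding e_def by blast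
      then have "inner e y = (lf y / lf e) * inner e e" by (simp add: inner_diff_right)
      then show ?thesis using ee le y0 by (simp add: field_simps)
    qed
    then show ?thesis by blast
  qed
  then obtain p where p: "\<And>y. lf y = inner p y" by blast
  have "weakly_converges_to z p" unfolding weakly_converges_to_def using lt p by simp
  then show ?thesis unfolding z_def using S.subseq_diagseq by blast
qed

lemma lyap_step_arith:
  fixes P1 Q1 Q0' Q0 E bs cs cb2 ba2 ncb nba l0 l1 L \<epsilon> :: real
  assumes h5: "0 \<le> P1 + l1 * Q1 - l0 * Q0'"
    and h1: "2 * P1 = bs - cs - cb2"
    and h2: "Q0' = Q0 + E"
    and h3: "\<bar>E\<bar> \<le> ncb * (L * nba)"
    and h4: "cb2 = ncb^2" "ba2 = nba^2"
    and l0: "l0 \<ge> 0" and L: "L \<ge> 0"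
    and l0L: "l0 * L \<le> (1 - 2 * \<epsilon>) / 2" and l1L: "l1 * L \<le> (1 - 2 * \<epsilon>) / 2"
  shows "cs - 2 * l1 * Q1 + l1 * L * cb2 + 2 * \<epsilon> * cb2 \<le> bs - 2 * l0 * Q0 + l0 * L * ba2"
proof -
  have a1: "l0 * \<bar>E\<bar> \<le> l0 * (ncb * (L * nba))" by (rule mult_left_mono[OF h3 l0])
  have a2: "2 * (ncb * nba) \<le> ncb^2 + nba^2"
    using sum_squares_bound[of ncb nba] by simp
  have a3: "(l0 * L) * (2 * (ncb * nba)) \<le> (l0 * L) * (ncb^2 + nba^2)"
    using l0 L a2 by (intro mult_left_mono) auto
  have a4: "- (l0 * E) \<le> l0 * \<bar>E\<bar>"
  proof -
    have "- E \<le> \<bar>E\<bar>" by simp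
    then have "l0 * (- E) \<le> l0 * \<bar>E\<bar>" using l0 by (rule mult_left_mono)
    then show ?thesis by simp
  qed
  have a5: "0 \<le> (1 - l0 * L - l1 * L - 2 * \<epsilon>) * cb2" using l0L l1L h4 by (intro mult_nonneg_nonneg) auto
  have e1: "l0 * (ncb * (L * nba)) = (l0 * L) * (ncb * nba)" by (simp add: ac_simps)
  have e2: "(l0 * L) * (2 * (ncb * nba)) = 2 * ((l0 * L) * (ncb * nba))" by simp
  have e3: "(l0 * L) * (ncb^2 + nba^2) = l0 * L * cb2 + l0 * L * ba2" using h4 by (simp add: algebra_simps)
  have e4: "(1 - l0 * L - l1 * L - 2 * \<epsilon>) * cb2 = cb2 - l0 * L * cb2 - l1 * L * cb2 - 2 * \<epsilon> * cb2"
    by (simp add: algebra_simps)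
  have e5: "l0 * Q0' = l0 * Q0 + l0 * E" using h2 by (simp add: algebra_simps)
  show ?thesis using h5 h1 a1 a3 a4 a5 e1 e2 e3 e4 e5 by linarith
qed

lemma lyap_lower_arith:
  fixes Q0 bs ba2 nbs nba l0 L \<epsilon> :: real
  assumes h3: "\<bar>Q0\<bar> \<le> nbs * (L * nba)" and h4: "bs = nbs^2" "ba2 = nba^2"
    and l0: "l0 \<ge> 0" and L: "L \<ge> 0" and e: "\<epsilon> \<ge> 0"
    and l0L: "l0 * L \<le> (1 - 2 * \<epsilon>) / 2"
  shows "bs / 2 \<le> bs - 2 * l0 * Q0 + l0 * L * ba2"
proof -
  have a1: "l0 * \<bar>Q0\<bar> \<le> l0 * (nbs * (L * nba))" by (rule mult_left_mono[OF h3 l0])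
  have a2: "2 * (nbs * nba) \<le> nbs^2 + nba^2"
    using sum_squares_bound[of nbs nba] by simp
  have a3: "(l0 * L) * (2 * (nbs * nba)) \<le> (l0 * L) * (nbs^2 + nba^2)"
    using l0 L a2 by (intro mult_left_mono) auto
  have a4: "l0 * Q0 \<le> l0 * \<bar>Q0\<bar>" using l0 by (simp add: mult_left_mono)
  have a5: "(l0 * L) * bs \<le> (1/2) * bs" using l0L e h4 by (intro mult_right_mono) auto
  have e1: "l0 * (nbs * (L * nba)) = (l0 * L) * (nbs * nba)" by (simp add: ac_simps)
  have e3: "(l0 * L) * (nbs^2 + nba^2) = l0 * L * bs + l0 * L * ba2" using h4 by (simp add: algebra_simps)
  have e6: "0 \<le> l0 * L * ba2" using l0 L h4 by simp
  show ?thesis using a1 a3 a4 a5 e1 e3 e6 by linarith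
qed

lemma frb_fejer:
  fixes A :: "'a::{real_inner,complete_space} \<Rightarrow> 'a set"
    and B :: "'a \<Rightarrow> 'a" and X :: "nat \<Rightarrow> 'a" and Lm :: "nat \<Rightarrow> real"
  assumes mm: "maximally_monotone A" and Bmon: "monotone_single B"
    and Blip: "L-lipschitz_on UNIV B" and Lpos: "L > 0" and eps: "\<epsilon> > 0"
    and bnds: "\<And>n. \<epsilon> \<le> Lm n \<and> Lm n \<le> (1 - 2 * \<epsilon>) / (2 * L)"
    and rec: "\<And>n. X (Suc (Suc n)) = resolvent (Lm (Suc n)) A
        (X (Suc n) - Lm (Suc n) *\<^sub>R B (X (Suc n)) - Lm n *\<^sub>R (B (X (Suc n)) - B (X n)))"
    and s: "s \<in> zeros_sum A B"
  shows "convergent (\<lambda>n. norm (X (Suc n) - s)^2) \<and> (\<exists>R. \<forall>n. norm (X (Suc n) - s) \<le> R)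
     \<and> (\<lambda>n. norm (X (Suc n) - X n)) \<longlonglongrightarrow> 0"
proof -
  have Lmpos: "Lm n > 0" for n using bnds[of n] eps by linarith
  have LmL: "Lm n * L \<le> (1 - 2 * \<epsilon>) / 2" for n
  proof -
    have "Lm n * L \<le> (1 - 2 * \<epsilon>) / (2 * L) * L" using bnds[of n] Lpos by (intro mult_right_mono) auto
    then show ?thesis using Lpos by simp
  qed
  have lip: "norm (B u - B v) \<le> L * norm (u - v)" for u v
    using Blip unfolding lipschitz_on_def dist_norm by auto
  have monA: "monotone_op A" using mm unfolding maximally_monotone_def by blast
  obtain as where asA: "as \<in> A s" and as0: "as + B s = 0" using s unfolding zeros_sum_def by blast
  have asB: "as = - B s" using as0 by (simp add: eq_neg_iff_add_eq_0)
  define nb where "nb n = norm (X (Suc n) - X n)" for n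
  define \<phi> where "\<phi> n = norm (X (Suc n) - s)^2 - 2 * Lm n * inner (X (Suc n) - s) (B (X (Suc n)) - B (X n))
      + Lm n * L * nb n ^2" for n
  have step: "\<phi> (Suc n) + 2 * \<epsilon> * nb (Suc n)^2 \<le> \<phi> n" for n
  proof -
    define a where "a = X n"
    define b where "b = X (Suc n)"
    define c where "c = X (Suc (Suc n))"
    define l0 where "l0 = Lm n"
    define l1 where "l1 = Lm (Suc n)"
    define zz where "zz = b - l1 *\<^sub>R B b - l0 *\<^sub>R (B b - B a)"
    have l1pos: "l1 > 0" unfolding l1_def by (rule Lmpos)
    have cres: "c = resolvent l1 A zz" unfolding c_def zz_def a_def b_def l0_def l1_def by (rule rec)
    have incl: "(1/l1) *\<^sub>R (zz - c) \<in> A c" unfolding cres by (rule resolvent_char[OF mm l1pos])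
    have mA: "0 \<le> inner (c - s) ((1/l1) *\<^sub>R (zz - c) - as)"
      using monA incl asA unfolding monotone_op_def by blast
    have mB: "0 \<le> inner (c - s) (B c - B s)" using Bmon unfolding monotone_single_def by blast
    define P1 where "P1 = inner (c - s) (b - c)"
    define Q1 where "Q1 = inner (c - s) (B c - B b)"
    define Q0' where "Q0' = inner (c - s) (B b - B a)"
    define Q0 where "Q0 = inner (b - s) (B b - B a)"
    define E where "E = inner (c - b) (B b - B a)"
    have zzc: "zz - c = (b - c) - l1 *\<^sub>R B b - l0 *\<^sub>R (B b - B a)" unfolding zz_def by (simp add: algebra_simps)
    have X2: "l1 * inner (c - s) ((1/l1) *\<^sub>R (zz - c) - as)
        = P1 - l1 * inner (c - s) (B b) - l0 * Q0' + l1 * inner (c - s) (B s)"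
    proof -
      have "l1 * inner (c - s) ((1/l1) *\<^sub>R (zz - c) - as) = inner (c - s) (zz - c) + l1 * inner (c - s) (B s)"
        using l1pos by (simp add: inner_diff_right asB algebra_simps)
      also have "inner (c - s) (zz - c) = P1 - l1 * inner (c - s) (B b) - l0 * Q0'"
        unfolding zzc P1_def Q0'_def by (simp add: inner_diff_right)
      finally show ?thesis .
    qed
    have "0 \<le> l1 * inner (c - s) ((1/l1) *\<^sub>R (zz - c) - as)" using mA l1pos by simp
    moreover have "0 \<le> l1 * inner (c - s) (B c - B s)" using mB l1pos by simp
    moreover have "l1 * inner (c - s) (B c - B s) = l1 * inner (c - s) (B c) - l1 * inner (c - s) (B s)"
      by (simp add: inner_diff_right algebra_simps)
    moreover have "l1 * Q1 = l1 * inner (c - s) (B c) - l1 * inner (c - s) (B b)"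
      unfolding Q1_def by (simp add: inner_diff_right algebra_simps)
    ultimately have h5: "0 \<le> P1 + l1 * Q1 - l0 * Q0'" using X2 by linarith
    have h1: "2 * P1 = norm (b - s)^2 - norm (c - s)^2 - norm (c - b)^2"
      unfolding P1_def by (simp add: power2_norm_eq_inner inner_simps inner_commute algebra_simps)
    have h2: "Q0' = Q0 + E" unfolding Q0'_def Q0_def E_def by (simp add: inner_diff_left)
    have h3: "\<bar>E\<bar> \<le> norm (c - b) * (L * norm (b - a))"
    proof -
      have "\<bar>E\<bar> \<le> norm (c - b) * norm (B b - B a)" unfolding E_def by (rule Cauchy_Schwarz_ineq2)
      also have "\<dots> \<le> norm (c - b) * (L * norm (b - a))" by (intro mult_left_mono lip) simp
      finally show ?thesis .
    qed
    have "norm (c - s)^2 - 2 * l1 * Q1 + l1 * L * norm (c - b)^2 + 2 * \<epsilon> * norm (c - b)^2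
        \<le> norm (b - s)^2 - 2 * l0 * Q0 + l0 * L * norm (b - a)^2"
      by (rule lyap_step_arith[OF h5 h1 h2 h3 refl refl])
         (use Lmpos LmL Lpos in \<open>auto simp: l0_def l1_def less_imp_le\<close>)
    then show ?thesis unfolding \<phi>_def nb_def a_def b_def c_def l0_def l1_def Q1_def Q0_def by simp
  qed
  have lower: "norm (X (Suc n) - s)^2 / 2 \<le> \<phi> n" for n
  proof -
    have h3: "\<bar>inner (X (Suc n) - s) (B (X (Suc n)) - B (X n))\<bar> \<le> norm (X (Suc n) - s) * (L * nb n)"
    proof -
      have "\<bar>inner (X (Suc n) - s) (B (X (Suc n)) - B (X n))\<bar> \<le> norm (X (Suc n) - s) * norm (B (X (Suc n)) - B (X n))"
        by (rule Cauchy_Schwarz_ineq2)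
      also have "\<dots> \<le> norm (X (Suc n) - s) * (L * nb n)" unfolding nb_def by (intro mult_left_mono lip) simp
      finally show ?thesis .
    qed
    show ?thesis unfolding \<phi>_def
      by (rule lyap_lower_arith[OF h3 refl refl _ _ _ LmL[of n]]) (use Lmpos Lpos eps in \<open>auto simp: less_imp_le\<close>)
  qed
  have phi0: "\<phi> n \<ge> 0" for n
  proof -
    have "0 \<le> norm (X (Suc n) - s)^2 / 2" by simp
    then show ?thesis using lower[of n] by linarith
  qed
  have dec: "antimono_on UNIV \<phi>"
  proof (rule decseq_SucI)
    fix n have "2 * \<epsilon> * nb (Suc n)^2 \<ge> 0" using eps by simp
    then show "\<phi> (Suc n) \<le> \<phi> n" using step[of n] by linarith
  qed
  obtain \<Phi> where phiL: "\<phi> \<longlonglongrightarrow> \<Phi>" using decseq_convergent[OF dec, of 0] phi0 by blast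
  have "(\<lambda>n. nb (Suc n)^2) \<longlonglongrightarrow> 0"
  proof (rule Lim_null_comparison)
    show "\<forall>\<^sub>F n in sequentially. norm (nb (Suc n)^2) \<le> (\<phi> n - \<phi> (Suc n)) / (2 * \<epsilon>)"
    proof (intro always_eventually allI)
      fix n show "norm (nb (Suc n)^2) \<le> (\<phi> n - \<phi> (Suc n)) / (2 * \<epsilon>)"
      proof -
        have "nb (Suc n)^2 * (2 * \<epsilon>) \<le> \<phi> n - \<phi> (Suc n)" using step[of n] by (simp add: algebra_simps)
        then have "nb (Suc n)^2 \<le> (\<phi> n - \<phi> (Suc n)) / (2 * \<epsilon>)" using eps by (simp add: pos_le_divide_eq)
        then show ?thesis by simp
      qed
    qed
    have "(\<lambda>n. (\<phi> n - \<phi> (Suc n)) / (2 * \<epsilon>)) \<longlonglongrightarrow> (\<Phi> - \<Phi>) / (2 * \<epsilon>)"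
      using LIMSEQ_Suc[OF phiL] phiL eps by (intro tendsto_divide tendsto_diff tendsto_const) auto
    then show "(\<lambda>n. (\<phi> n - \<phi> (Suc n)) / (2 * \<epsilon>)) \<longlonglongrightarrow> 0" by simp
  qed
  then have "(\<lambda>n. sqrt (nb (Suc n)^2)) \<longlonglongrightarrow> sqrt 0" by (intro tendsto_intros)
  then have "(\<lambda>n. nb (Suc n)) \<longlonglongrightarrow> 0" by (simp add: nb_def)
  then have nbL: "nb \<longlonglongrightarrow> 0" by (rule LIMSEQ_imp_Suc)
  define R where "R = sqrt (2 * \<phi> 0)"
  have Rb: "norm (X (Suc n) - s) \<le> R" for n
  proof -
    have "\<phi> n \<le> \<phi> 0" using dec by (rule decseqD) simp
    then have "norm (X (Suc n) - s)^2 \<le> 2 * \<phi> 0" using lower[of n] by linarith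
    then show ?thesis unfolding R_def by (simp add: real_le_rsqrt)
  qed
  have R0: "R \<ge> 0" unfolding R_def using phi0[of 0] by simp
  define g where "g n = 2 * Lm n * inner (X (Suc n) - s) (B (X (Suc n)) - B (X n)) - Lm n * L * nb n ^2" for n
  have "g \<longlonglongrightarrow> 0"
  proof (rule Lim_null_comparison)
    show "\<forall>\<^sub>F n in sequentially. norm (g n) \<le> R * nb n + nb n ^2"
    proof (intro always_eventually allI)
      fix n
      have "(1 - 2 * \<epsilon>) / 2 \<le> 1/2" using eps by simp
      then have LmL': "Lm n * L \<le> 1/2" using LmL[of n] by linarith
      have i1: "\<bar>inner (X (Suc n) - s) (B (X (Suc n)) - B (X n))\<bar> \<le> R * (L * nb n)"
      proof -
        have "\<bar>inner (X (Suc n) - s) (B (X (Suc n)) - B (X n))\<bar> \<le> norm (X (Suc n) - s) * norm (B (X (Suc n)) - B (X n))"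
          by (rule Cauchy_Schwarz_ineq2)
        also have "\<dots> \<le> R * (L * nb n)" unfolding nb_def
          using Rb[of n] lip[of "X (Suc n)" "X n"] R0 by (intro mult_mono) auto
        finally show ?thesis .
      qed
      have i2: "2 * Lm n * \<bar>inner (X (Suc n) - s) (B (X (Suc n)) - B (X n))\<bar> \<le> 2 * Lm n * (R * (L * nb n))"
        using i1 Lmpos[of n] by (intro mult_left_mono) auto
      have i3: "2 * Lm n * (R * (L * nb n)) = 2 * (Lm n * L) * (R * nb n)" by (simp add: ac_simps)
      have i4: "2 * (Lm n * L) * (R * nb n) \<le> R * nb n"
      proof -
        have "0 \<le> R * nb n" using R0 unfolding nb_def by simp
        then have "(2 * (Lm n * L)) * (R * nb n) \<le> 1 * (R * nb n)" using LmL' by (intro mult_right_mono) auto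
        then show ?thesis by simp
      qed
      have i5: "0 \<le> Lm n * L * nb n ^2 \<and> Lm n * L * nb n ^2 \<le> nb n ^2"
      proof
        show "0 \<le> Lm n * L * nb n ^2" using Lmpos[of n] Lpos by simp
        have "Lm n * L * nb n ^2 \<le> 1 * nb n ^2" using LmL' by (intro mult_right_mono) auto
        then show "Lm n * L * nb n ^2 \<le> nb n ^2" by simp
      qed
      have "\<bar>2 * Lm n * inner (X (Suc n) - s) (B (X (Suc n)) - B (X n))\<bar>
          = 2 * Lm n * \<bar>inner (X (Suc n) - s) (B (X (Suc n)) - B (X n))\<bar>"
        using Lmpos[of n] by (simp add: abs_mult)
      then show "norm (g n) \<le> R * nb n + nb n ^2" unfolding g_def real_norm_def
        using i2 i3 i4 i5 by linarith
    qed
    have "(\<lambda>n. R * nb n + nb n ^2) \<longlonglongrightarrow> R * 0 + 0^2" by (intro tendsto_intros nbL)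
    then show "(\<lambda>n. R * nb n + nb n ^2) \<longlonglongrightarrow> 0" by simp
  qed
  then have "(\<lambda>n. \<phi> n + g n) \<longlonglongrightarrow> \<Phi> + 0" by (intro tendsto_intros phiL)
  moreover have "\<phi> n + g n = norm (X (Suc n) - s)^2" for n unfolding \<phi>_def g_def by simp
  ultimately have "(\<lambda>n. norm (X (Suc n) - s)^2) \<longlonglongrightarrow> \<Phi>" by simp
  then show ?thesis using Rb nbL unfolding nb_def convergent_def by blast
qed

lemma frb_core:
  fixes A :: "'a::{real_inner,complete_space} \<Rightarrow> 'a set"
    and B :: "'a \<Rightarrow> 'a" and X :: "nat \<Rightarrow> 'a" and Lm :: "nat \<Rightarrow> real"
  assumes mm: "maximally_monotone A" and Bmon: "monotone_single B"
    and Blip: "L-lipschitz_on UNIV B" and Lpos: "L > 0" and eps: "\<epsilon> > 0"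
    and bnds: "\<And>n. \<epsilon> \<le> Lm n \<and> Lm n \<le> (1 - 2 * \<epsilon>) / (2 * L)"
    and rec: "\<And>n. X (Suc (Suc n)) = resolvent (Lm (Suc n)) A
        (X (Suc n) - Lm (Suc n) *\<^sub>R B (X (Suc n)) - Lm n *\<^sub>R (B (X (Suc n)) - B (X n)))"
    and zne: "zeros_sum A B \<noteq> {}"
  shows "\<exists>p\<in>zeros_sum A B. weakly_converges_to (\<lambda>n. X (Suc n)) p"
proof -
  have fej: "convergent (\<lambda>n. norm (X (Suc n) - s)^2) \<and> (\<exists>R. \<forall>n. norm (X (Suc n) - s) \<le> R)
     \<and> (\<lambda>n. norm (X (Suc n) - X n)) \<longlonglongrightarrow> 0" if sZ: "s \<in> zeros_sum A B" for s
    by (rule frb_fejer[where A=A and B=B and X=X and Lm=Lm and L=L and \<epsilon>=\<epsilon> and s=s, OF mm Bmon Blip Lpos eps bnds rec sZ])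
  obtain s0 where s0: "s0 \<in> zeros_sum A B" using zne by blast
  obtain R where R: "\<And>n. norm (X (Suc n) - s0) \<le> R" using fej[OF s0] by blast
  have nbL: "(\<lambda>n. norm (X (Suc n) - X n)) \<longlonglongrightarrow> 0" using fej[OF s0] by blast
  define Y where "Y n = X (Suc n)" for n
  define Rb where "Rb = R + norm s0"
  have Yb: "norm (Y n) \<le> Rb" for n
  proof -
    have "norm (Y n) \<le> norm (X (Suc n) - s0) + norm s0" unfolding Y_def
      using norm_triangle_sub[of "X (Suc n)" s0] by linarith
    then show ?thesis using R[of n] unfolding Rb_def by linarith
  qed
  have Lmpos: "Lm n > 0" for n using bnds[of n] eps by linarith
  have LmL: "Lm n * L \<le> 1/2" for n
  proof -
    have "Lm n * L \<le> (1 - 2 * \<epsilon>) / (2 * L) * L" using bnds[of n] Lpos by (intro mult_right_mono) auto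
    also have "\<dots> = (1 - 2 * \<epsilon>) / 2" using Lpos by simp
    also have "\<dots> \<le> 1/2" using eps by simp
    finally show ?thesis .
  qed
  have lip: "norm (B u - B v) \<le> L * norm (u - v)" for u v
    using Blip unfolding lipschitz_on_def dist_norm by auto
  have monA: "monotone_op A" using mm unfolding maximally_monotone_def by blast
  define v where "v n = (1 / Lm (Suc n)) *\<^sub>R (X (Suc n) - X (Suc (Suc n))) + (B (X (Suc (Suc n))) - B (X (Suc n)))
      - (Lm n / Lm (Suc n)) *\<^sub>R (B (X (Suc n)) - B (X n))" for n
  have vincl: "v n - B (X (Suc (Suc n))) \<in> A (X (Suc (Suc n)))" for n
  proof -
    define a where "a = X n"
    define b where "b = X (Suc n)"
    define c where "c = X (Suc (Suc n))"
    define l0 where "l0 = Lm n"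
    define l1 where "l1 = Lm (Suc n)"
    define zz where "zz = b - l1 *\<^sub>R B b - l0 *\<^sub>R (B b - B a)"
    have l1pos: "l1 > 0" unfolding l1_def by (rule Lmpos)
    have cres: "c = resolvent l1 A zz" unfolding c_def zz_def a_def b_def l0_def l1_def by (rule rec)
    have incl: "(1/l1) *\<^sub>R (zz - c) \<in> A c" unfolding cres by (rule resolvent_char[OF mm l1pos])
    have "(1/l1) *\<^sub>R (zz - c) = (1/l1) *\<^sub>R (b - c) - ((1/l1) * l1) *\<^sub>R B b - ((1/l1) * l0) *\<^sub>R (B b - B a)"
      unfolding zz_def by (simp add: algebra_simps)
    also have "\<dots> = v n - B c"
      using l1pos unfolding v_def a_def b_def c_def l0_def l1_def by (simp add: algebra_simps)
    finally show ?thesis using incl unfolding c_def by simp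
  qed
  have vL: "v \<longlonglongrightarrow> 0"
  proof (rule Lim_null_comparison)
    define nb where "nb n = norm (X (Suc n) - X n)" for n
    show "\<forall>\<^sub>F n in sequentially. norm (v n) \<le> (1/\<epsilon>) * nb (Suc n) + L * nb (Suc n) + (1/(2*\<epsilon>)) * nb n"
    proof (intro always_eventually allI)
      fix n
      have l1e: "1 / Lm (Suc n) \<le> 1 / \<epsilon>" using bnds[of "Suc n"] eps by (simp add: frac_le)
      have t1: "norm ((1 / Lm (Suc n)) *\<^sub>R (X (Suc n) - X (Suc (Suc n)))) \<le> (1/\<epsilon>) * nb (Suc n)"
      proof -
        have "norm ((1 / Lm (Suc n)) *\<^sub>R (X (Suc n) - X (Suc (Suc n)))) = (1 / Lm (Suc n)) * nb (Suc n)"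
          using Lmpos[of "Suc n"] unfolding nb_def by (simp add: norm_minus_commute)
        also have "\<dots> \<le> (1/\<epsilon>) * nb (Suc n)" using l1e unfolding nb_def by (intro mult_right_mono) auto
        finally show ?thesis .
      qed
      have t2: "norm (B (X (Suc (Suc n))) - B (X (Suc n))) \<le> L * nb (Suc n)" unfolding nb_def by (rule lip)
      have t3: "norm ((Lm n / Lm (Suc n)) *\<^sub>R (B (X (Suc n)) - B (X n))) \<le> (1/(2*\<epsilon>)) * nb n"
      proof -
        have "norm ((Lm n / Lm (Suc n)) *\<^sub>R (B (X (Suc n)) - B (X n))) = (Lm n / Lm (Suc n)) * norm (B (X (Suc n)) - B (X n))"
          using Lmpos[of n] Lmpos[of "Suc n"] by simp
        also have "\<dots> \<le> (Lm n / Lm (Suc n)) * (L * nb n)"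
          unfolding nb_def using Lmpos[of n] Lmpos[of "Suc n"] by (intro mult_left_mono lip) auto
        also have "\<dots> = (Lm n * L) * (1 / Lm (Suc n)) * nb n" by simp
        also have "\<dots> \<le> (1/2) * (1/\<epsilon>) * nb n"
          using LmL[of n] l1e Lmpos[of n] Lmpos[of "Suc n"] Lpos unfolding nb_def
          by (intro mult_right_mono mult_mono) auto
        also have "\<dots> = (1/(2*\<epsilon>)) * nb n" by simp
        finally show ?thesis .
      qed
      have "norm (v n) \<le> norm ((1 / Lm (Suc n)) *\<^sub>R (X (Suc n) - X (Suc (Suc n))) + (B (X (Suc (Suc n))) - B (X (Suc n))))
          + norm ((Lm n / Lm (Suc n)) *\<^sub>R (B (X (Suc n)) - B (X n)))"
        unfolding v_def by (rule norm_triangle_ineq4)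
      also have "\<dots> \<le> norm ((1 / Lm (Suc n)) *\<^sub>R (X (Suc n) - X (Suc (Suc n)))) + norm (B (X (Suc (Suc n))) - B (X (Suc n)))
          + norm ((Lm n / Lm (Suc n)) *\<^sub>R (B (X (Suc n)) - B (X n)))"
        using norm_triangle_ineq[of "(1 / Lm (Suc n)) *\<^sub>R (X (Suc n) - X (Suc (Suc n)))" "B (X (Suc (Suc n))) - B (X (Suc n))"]
        by linarith
      finally show "norm (v n) \<le> (1/\<epsilon>) * nb (Suc n) + L * nb (Suc n) + (1/(2*\<epsilon>)) * nb n"
        using t1 t2 t3 by linarith
    qed
    have nbL': "nb \<longlonglongrightarrow> 0" using nbL unfolding nb_def .
    have "(\<lambda>n. (1/\<epsilon>) * nb (Suc n) + L * nb (Suc n) + (1/(2*\<epsilon>)) * nb n) \<longlonglongrightarrow> (1/\<epsilon>) * 0 + L * 0 + (1/(2*\<epsilon>)) * 0"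
      using LIMSEQ_Suc[OF nbL'] nbL' by (intro tendsto_add tendsto_mult tendsto_const) auto
    then show "(\<lambda>n. (1/\<epsilon>) * nb (Suc n) + L * nb (Suc n) + (1/(2*\<epsilon>)) * nb n) \<longlonglongrightarrow> 0" by simp
  qed
  have cluster: "q \<in> zeros_sum A B"
    if t: "strict_mono t" and wq: "\<And>y. (\<lambda>j. inner (X (t j + 2)) y) \<longlonglongrightarrow> inner q y" for t q
  proof (rule zero_char[OF mm Blip Lpos])
    fix u a assume aA: "a \<in> A u"
    have ineq: "- ((norm u + Rb) * norm (v (t j))) \<le> inner u (a + B u) - inner (X (t j + 2)) (a + B u)" for j
    proof -
      define c where "c = X (t j + 2)"
      have wA: "v (t j) - B c \<in> A c" using vincl[of "t j"] unfolding c_def by (simp add: numeral_2_eq_2)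
      have m1: "0 \<le> inner (u - c) (a - (v (t j) - B c))" using monA aA wA unfolding monotone_op_def by blast
      have m2: "0 \<le> inner (u - c) (B u - B c)" using Bmon unfolding monotone_single_def by blast
      have "inner (u - c) (a - (v (t j) - B c)) + inner (u - c) (B u - B c) = inner (u - c) (a + B u) - inner (u - c) (v (t j))"
        by (simp add: inner_diff_right inner_add_right)
      then have i1: "inner (u - c) (v (t j)) \<le> inner (u - c) (a + B u)" using m1 m2 by linarith
      have cb: "norm c \<le> Rb" unfolding c_def using Yb[of "Suc (t j)"] by (simp add: Y_def numeral_2_eq_2)
      have "- inner (u - c) (v (t j)) \<le> norm (u - c) * norm (v (t j))"
        using Cauchy_Schwarz_ineq2[of "u - c" "v (t j)"] by linarith
      also have "\<dots> \<le> (norm u + Rb) * norm (v (t j))"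
        using cb norm_triangle_ineq4[of u c] by (intro mult_right_mono) auto
      finally have "- ((norm u + Rb) * norm (v (t j))) \<le> inner (u - c) (a + B u)" using i1 by linarith
      then show ?thesis unfolding c_def by (simp add: inner_diff_left)
    qed
    have l1: "(\<lambda>j. - ((norm u + Rb) * norm (v (t j)))) \<longlonglongrightarrow> - ((norm u + Rb) * norm (0::'a))"
      using LIMSEQ_subseq_LIMSEQ[OF vL t] by (intro tendsto_intros) (simp add: o_def)
    have l2: "(\<lambda>j. inner u (a + B u) - inner (X (t j + 2)) (a + B u)) \<longlonglongrightarrow> inner u (a + B u) - inner q (a + B u)"
      by (rule tendsto_diff[OF tendsto_const wq])
    have "- ((norm u + Rb) * norm (0::'a)) \<le> inner u (a + B u) - inner q (a + B u)"
      using l1 l2 ineq by (intro LIMSEQ_le[OF l1 l2]) auto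
    then show "0 \<le> inner (u - q) (a + B u)" by (simp add: inner_diff_left)
  qed
  have cluster': "q \<in> zeros_sum A B"
    if r: "strict_mono r" and wq: "weakly_converges_to (\<lambda>j. Y (r j)) q" for r q
  proof (rule cluster)
    define t where "t j = r (Suc j) - 1" for j
    have rge: "r (Suc j) \<ge> 1" for j using seq_suble[OF r, of "Suc j"] by simp
    show "strict_mono t" unfolding strict_mono_Suc_iff t_def
      using rge r by (simp add: strict_mono_Suc_iff) (metis Suc_diff_1 Suc_le_eq diff_less_mono less_one not_le strict_mono_Suc_iff)
    show "(\<lambda>j. inner (X (t j + 2)) y) \<longlonglongrightarrow> inner q y" for y
    proof -
      have "(\<lambda>j. inner (Y (r j)) y) \<longlonglongrightarrow> inner q y" using wq unfolding weakly_converges_to_def by blast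
      then have "(\<lambda>j. inner (Y (r (Suc j))) y) \<longlonglongrightarrow> inner q y" by (rule LIMSEQ_Suc)
      moreover have "X (t j + 2) = Y (r (Suc j))" for j
        using rge[of j] unfolding t_def Y_def by (simp add: numeral_2_eq_2)
      ultimately show ?thesis by simp
    qed
  qed
  have conv: "convergent (\<lambda>n. norm (Y n - s)^2)" if "s \<in> zeros_sum A B" for s
    using fej[OF that] unfolding Y_def by blast
  obtain r0 p where r0: "strict_mono r0" and wp: "weakly_converges_to (Y \<circ> r0) p"
    using weak_compact[of Y Rb] Yb by blast
  have pZ: "p \<in> zeros_sum A B" using cluster'[OF r0] wp by (simp add: o_def)
  have uniq: "p' = q'" if rp: "strict_mono rp" "weakly_converges_to (Y \<circ> rp) p'" "p' \<in> zeros_sum A B"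
    and rq: "strict_mono rq" "weakly_converges_to (Y \<circ> rq) q'" "q' \<in> zeros_sum A B" for rp rq p' q'
  proof -
    obtain cp where cp: "(\<lambda>n. norm (Y n - p')^2) \<longlonglongrightarrow> cp" using conv[OF rp(3)] unfolding convergent_def by blast
    obtain cq where cq: "(\<lambda>n. norm (Y n - q')^2) \<longlonglongrightarrow> cq" using conv[OF rq(3)] unfolding convergent_def by blast
    have id: "inner (Y n) (p' - q') = (norm (Y n - q')^2 - norm (Y n - p')^2 - norm q'^2 + norm p'^2) / 2" for n
      by (simp add: power2_norm_eq_inner inner_simps inner_commute algebra_simps)
    define l where "l = (cq - cp - norm q'^2 + norm p'^2) / 2"
    have ll: "(\<lambda>n. inner (Y n) (p' - q')) \<longlonglongrightarrow> l" unfolding id l_def using cp cq by (intro tendsto_intros) auto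
    have "(\<lambda>j. inner (Y (rp j)) (p' - q')) \<longlonglongrightarrow> l" using LIMSEQ_subseq_LIMSEQ[OF ll rp(1)] by (simp add: o_def)
    moreover have "(\<lambda>j. inner (Y (rp j)) (p' - q')) \<longlonglongrightarrow> inner p' (p' - q')"
      using rp(2) unfolding weakly_converges_to_def by (simp add: o_def)
    ultimately have e1: "inner p' (p' - q') = l" using LIMSEQ_unique by blast
    have "(\<lambda>j. inner (Y (rq j)) (p' - q')) \<longlonglongrightarrow> l" using LIMSEQ_subseq_LIMSEQ[OF ll rq(1)] by (simp add: o_def)
    moreover have "(\<lambda>j. inner (Y (rq j)) (p' - q')) \<longlonglongrightarrow> inner q' (p' - q')"
      using rq(2) unfolding weakly_converges_to_def by (simp add: o_def)
    ultimately have e2: "inner q' (p' - q') = l" using LIMSEQ_unique by blast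
    have "inner (p' - q') (p' - q') = 0" using e1 e2 by (simp add: inner_diff_left)
    then show ?thesis by simp
  qed
  have "weakly_converges_to Y p"
    unfolding weakly_converges_to_def
  proof
    fix y
    show "(\<lambda>n. inner (Y n) y) \<longlonglongrightarrow> inner p y"
    proof (rule ccontr)
      assume nc: "\<not> ?thesis"
      then obtain e where e: "e > 0" and freq0: "\<forall>N. \<exists>n\<ge>N. \<not> norm (inner (Y n) y - inner p y) < e"
        unfolding LIMSEQ_iff by blast
      have freq: "\<exists>n\<ge>N. e \<le> \<bar>inner (Y n) y - inner p y\<bar>" for N
        using freq0 by (simp add: not_less)
      define S where "S = {n. e \<le> \<bar>inner (Y n) y - inner p y\<bar>}"
      have "infinite S" unfolding S_def infinite_nat_iff_unbounded_le using freq by blast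
      then obtain r1 :: "nat \<Rightarrow> nat" where r1: "strict_mono r1" and r1S: "\<And>n. r1 n \<in> S" using infinite_enumerate by blast
      define Z where "Z = Y \<circ> r1"
      have Zb: "norm (Z n) \<le> Rb" for n unfolding Z_def o_def by (rule Yb)
      obtain r2 q where r2: "strict_mono r2" and wq0: "weakly_converges_to (Z \<circ> r2) q"
        using weak_compact[of Z Rb, OF Zb] by blast
      have wq: "weakly_converges_to (Y \<circ> r1 \<circ> r2) q" using wq0 unfolding Z_def .
      have r12: "strict_mono (r1 \<circ> r2)" using r1 r2 by (rule strict_mono_o)
      have wq': "weakly_converges_to (Y \<circ> (r1 \<circ> r2)) q" using wq by (simp add: o_assoc)
      have qZ: "q \<in> zeros_sum A B" using cluster'[OF r12] wq' by (simp add: o_def)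
      have pq: "p = q" by (rule uniq[OF r0 wp pZ r12 wq' qZ])
      have "(\<lambda>j. \<bar>inner (Y (r1 (r2 j))) y - inner p y\<bar>) \<longlonglongrightarrow> \<bar>inner q y - inner p y\<bar>"
      proof -
        have "(\<lambda>j. inner (Y (r1 (r2 j))) y) \<longlonglongrightarrow> inner q y" using wq unfolding weakly_converges_to_def by (simp add: o_def)
        then show ?thesis by (intro tendsto_rabs tendsto_diff tendsto_const)
      qed
      then have "e \<le> \<bar>inner q y - inner p y\<bar>"
        using r1S unfolding S_def by (intro LIMSEQ_le_const[of _ _ e]) auto
      then show False using pq e by simp
    qed
  qed
  then show ?thesis using pZ unfolding Y_def by blast
qed

theorem theorem2p5:
  fixes A :: "'a::{real_inner, complete_space} \<Rightarrow> 'a set"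
    and B :: "'a \<Rightarrow> 'a"
    and L \<epsilon> :: real
    and lam :: "int \<Rightarrow> real"
    and x :: "int \<Rightarrow> 'a"
  assumes maxmon: "maximally_monotone A"
    and Bmon: "monotone_single B"
    and Blip: "L-lipschitz_on UNIV B"
    and Lpos: "L > 0"
    and zeros_ne: "zeros_sum A B \<noteq> {}"
    and eps_pos: "\<epsilon> > 0"
    and lam_bounds: "\<And>k. k \<ge> -1 \<Longrightarrow> \<epsilon> \<le> lam k \<and> lam k \<le> (1 - 2 * \<epsilon>) / (2 * L)"
    and iter: "\<And>k. k \<ge> 0 \<Longrightarrow>
      x (k + 1) = resolvent (lam k) A
        (x k - lam k *\<^sub>R B (x k) - lam (k - 1) *\<^sub>R (B (x k) - B (x (k - 1))))"
  shows "\<exists>p \<in> zeros_sum A B. weakly_converges_to (\<lambda>n. x (int n)) p"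
proof -
  define X where "X n = x (int n - 1)" for n
  define Lm where "Lm n = lam (int n - 1)" for n
  have bnds: "\<epsilon> \<le> Lm n \<and> Lm n \<le> (1 - 2 * \<epsilon>) / (2 * L)" for n
    unfolding Lm_def by (rule lam_bounds) simp
  have rec: "X (Suc (Suc n)) = resolvent (Lm (Suc n)) A
        (X (Suc n) - Lm (Suc n) *\<^sub>R B (X (Suc n)) - Lm n *\<^sub>R (B (X (Suc n)) - B (X n)))" for n
  proof -
    have e1: "int (Suc (Suc n)) - 1 = int n + 1" by simp
    have e2: "int (Suc n) - 1 = int n" by simp
    have "int n \<ge> 0" by simp
    from iter[OF this] show ?thesis unfolding X_def Lm_def e1 e2 .
  qed
  obtain p where pZ: "p \<in> zeros_sum A B" and wp: "weakly_converges_to (\<lambda>n. X (Suc n)) p"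
    using frb_core[where A=A and B=B and X=X and Lm=Lm and L=L and \<epsilon>=\<epsilon>, OF maxmon Bmon Blip Lpos eps_pos bnds rec zeros_ne]
    by blast
  have "(\<lambda>n. X (Suc n)) = (\<lambda>n. x (int n))" unfolding X_def by simp
  then show ?thesis using pZ wp by auto
qed

end
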